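(* Let $\mathcal{G}$ be a reaction network with species $X_1,\dots,X_n$, $n\ge2$, and let $\tilde{\mathcal{G}}$ be its homeostasis-associated reaction network. Suppose that for every choice of $n$ distinct reactions $\mathbf{y}_1\to\mathbf{y}'_1,\dots,\mathbf{y}_n\to\mathbf{y}'_n$ of $\tilde{\mathcal{G}}$, $$\det(\mathbf{y}_1,\dots,\mathbf{y}_n)\,\det(\mathbf{y}'_1-\mathbf{y}_1,\dots,\mathbf{y}'_n-\mathbf{y}_n)=0.$$ Then for every choice of positive rate constants $\mathbf{k}$ for $\mathcal{G}$, $\det B(\mathbf{x},\mathbf{k})=0$ for all $\mathbf{x}\in\mathbb{R}^n_{>0}$, where $B$ is the Jacobian $D_{\mathbf{x}}\mathbf{f}(\mathbf{x},\mathbf{k})$ of $\mathcal{G}$ with first row and last column deleted. Consequently, the mass-action input–output system of $\mathcal{G}$ (input $X_1$, output $X_n$) exhibits perfect homeostasis at every linearly stable positive equilibrium: if $(\tilde{\mathbf{x}},\tilde\zeta)$ is such an equilibrium and $\zeta\mapsto\mathbf{x}(\zeta)$ is the smooth branch of equilibria with $\mathbf{x}(\tilde\zeta)=\tilde{\mathbf{x}}$ given by the implicit function theorem, then $\frac{d x_n}{d\zeta}(\zeta)=0$ for all $\zeta$ in a neighbourhood of $\tilde\zeta$.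
   Context: A reaction network with species $X_1,\dots,X_n$ is a finite set of reactions $\mathbf{y}\to\mathbf{y}'$ with $\mathbf{y}\ne\mathbf{y}'\in\mathbb{Z}^n_{\ge0}$. Given positive rate constants $\mathbf{k}$, the mass-action vector field is $\mathbf{f}(\mathbf{x},\mathbf{k})=\sum_{\mathbf{y}\to\mathbf{y}'}k_{\mathbf{y}\to\mathbf{y}'}\mathbf{x}^{\mathbf{y}}(\mathbf{y}'-\mathbf{y})$ on $\mathbb{R}^n_{>0}$. Homeostasis-associated network $\tilde{\mathcal{G}}$ of $\mathcal{G}$: Step 1: replace each reaction $\mathbf{y}\to\mathbf{y}'$ of $\mathcal{G}$ by $\mathbf{y}\to\hat{\mathbf{y}}'$, where $\hat y'_1=y_1$ and $\hat y'_i=y'_i$ for $i\ge2$; reactions that become trivial are discarded and coinciding reactions are identified. Step 2: add the reaction $X_n\to X_1$. Input–output system: $\dot{\mathbf{x}}=\mathbf{f}(\mathbf{x},\mathbf{k})+\zeta\mathbf{e}_1$ with parameter $\zeta$, input $x_1$, output $x_n$. An equilibrium is linearly stable if all eigenvalues of the Jacobian there have negative real part. Perfect homeostasis means the derivative of the input–output function $\zeta\mapsto x_n(\zeta)$ along the equilibrium branch vanishes on an entire interval. *)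

theory Defs
  imports Complex_Main "HOL-Analysis.Derivative" "Jordan_Normal_Form.Char_Poly" "Jordan_Normal_Form.Determinant"
begin

text \<open>Species X_1,...,X_n are indexed 0,...,n-1. A complex is a function
  nat => nat vanishing outside {0..<n}; a reaction is a pair (y, y').\<close>

type_synonym complex_vec = "nat \<Rightarrow> nat"
type_synonym reaction = "complex_vec \<times> complex_vec"

definition is_complex :: "nat \<Rightarrow> complex_vec \<Rightarrow> bool" where
  "is_complex n y \<longleftrightarrow> (\<forall>i\<ge>n. y i = 0)"

definition reaction_network :: "nat \<Rightarrow> reaction set \<Rightarrow> bool" where
  "reaction_network n R \<longleftrightarrow> finite R \<and>
     (\<forall>(y, y') \<in> R. is_complex n y \<and> is_complex n y' \<and> y \<noteq> y')"

definition unit_complex :: "nat \<Rightarrow> complex_vec" where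
  "unit_complex i = (\<lambda>j. if j = i then 1 else 0)"

text \<open>Homeostasis-associated network: replace y -> y' by y -> y'(X_1 := y_1),
  discard trivial reactions (set semantics identifies coinciding ones), add X_n -> X_1.\<close>
definition homeostasis_network :: "nat \<Rightarrow> reaction set \<Rightarrow> reaction set" where
  "homeostasis_network n R =
     {(y, y'(0 := y 0)) | y y'. (y, y') \<in> R \<and> y'(0 := y 0) \<noteq> y}
     \<union> {(unit_complex (n - 1), unit_complex 0)}"

definition monomial :: "nat \<Rightarrow> (nat \<Rightarrow> real) \<Rightarrow> complex_vec \<Rightarrow> real" where
  "monomial n x y = (\<Prod>j<n. x j ^ y j)"

definition mass_action :: "nat \<Rightarrow> reaction set \<Rightarrow> (reaction \<Rightarrow> real) \<Rightarrow> (nat \<Rightarrow> real) \<Rightarrow> nat \<Rightarrow> real" where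
  "mass_action n R k x i =
     (\<Sum>r\<in>R. k r * monomial n x (fst r) * (real (snd r i) - real (fst r i)))"

definition jacobian :: "nat \<Rightarrow> ((nat \<Rightarrow> real) \<Rightarrow> nat \<Rightarrow> real) \<Rightarrow> (nat \<Rightarrow> real) \<Rightarrow> real mat" where
  "jacobian n F x = mat n n (\<lambda>(i, j). deriv (\<lambda>t. F (x(j := t)) i) (x j))"

definition B_matrix :: "nat \<Rightarrow> reaction set \<Rightarrow> (reaction \<Rightarrow> real) \<Rightarrow> (nat \<Rightarrow> real) \<Rightarrow> real mat" where
  "B_matrix n R k x =
     mat (n - 1) (n - 1) (\<lambda>(i, j). jacobian n (mass_action n R k) x $$ (i + 1, j))"

definition positive_vec :: "nat \<Rightarrow> (nat \<Rightarrow> real) \<Rightarrow> bool" where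
  "positive_vec n x \<longleftrightarrow> (\<forall>i<n. x i > 0)"

definition io_field :: "nat \<Rightarrow> reaction set \<Rightarrow> (reaction \<Rightarrow> real) \<Rightarrow> real \<Rightarrow> (nat \<Rightarrow> real) \<Rightarrow> nat \<Rightarrow> real" where
  "io_field n R k \<zeta> x i = mass_action n R k x i + (if i = 0 then \<zeta> else 0)"

definition io_equilibrium :: "nat \<Rightarrow> reaction set \<Rightarrow> (reaction \<Rightarrow> real) \<Rightarrow> (nat \<Rightarrow> real) \<Rightarrow> real \<Rightarrow> bool" where
  "io_equilibrium n R k x \<zeta> \<longleftrightarrow> positive_vec n x \<and> (\<forall>i<n. io_field n R k \<zeta> x i = 0)"

definition linearly_stable :: "nat \<Rightarrow> reaction set \<Rightarrow> (reaction \<Rightarrow> real) \<Rightarrow> (nat \<Rightarrow> real) \<Rightarrow> real \<Rightarrow> bool" where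
  "linearly_stable n R k x \<zeta> \<longleftrightarrow>
     (\<forall>ev::complex. eigenvalue (map_mat complex_of_real (jacobian n (io_field n R k \<zeta>) x)) ev
        \<longrightarrow> Re ev < 0)"

definition equilibrium_branch :: "nat \<Rightarrow> reaction set \<Rightarrow> (reaction \<Rightarrow> real) \<Rightarrow> (real \<Rightarrow> nat \<Rightarrow> real) \<Rightarrow> real \<Rightarrow> real \<Rightarrow> (nat \<Rightarrow> real) \<Rightarrow> bool" where
  "equilibrium_branch n R k X d z0 x0 \<longleftrightarrow> d > 0 \<and> (\<forall>i<n. X z0 i = x0 i) \<and>
     (\<forall>z. \<bar>z - z0\<bar> < d \<longrightarrow> io_equilibrium n R k (X z) z \<and>
         (\<forall>i<n. (\<lambda>s. X s i) differentiable (at z)))"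

end

theory Submission
  imports Defs
begin


definition dmono :: "nat \<Rightarrow> (nat \<Rightarrow> real) \<Rightarrow> complex_vec \<Rightarrow> nat \<Rightarrow> real" where
  "dmono n x y j = real (y j) * x j ^ (y j - 1) * (\<Prod>l\<in>{..<n}-{j}. x l ^ y l)"

lemma mono_deriv:
  assumes "\<And>l. l<n \<Longrightarrow> ((\<lambda>t. \<gamma> t l) has_real_derivative g l) (at t0)"
  shows "((\<lambda>t. monomial n (\<gamma> t) y) has_real_derivative (\<Sum>l<n. dmono n (\<gamma> t0) y l * g l)) (at t0)"
proof -
  have d: "((\<lambda>t. \<gamma> t l ^ y l) has_derivative (*) (real (y l) * \<gamma> t0 l ^ (y l - 1) * g l)) (at t0)"
    if "l \<in> {..<n}" for l
  proof -
    have "((\<lambda>t. \<gamma> t l ^ y l) has_real_derivative (real (y l) * \<gamma> t0 l ^ (y l - 1) * g l)) (at t0)"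
      using assms[of l] that by (auto intro!: derivative_eq_intros)
    then show ?thesis unfolding has_field_derivative_def by simp
  qed
  have "((\<lambda>t. \<Prod>l\<in>{..<n}. \<gamma> t l ^ y l) has_derivative
     (\<lambda>h. \<Sum>i\<in>{..<n}. (real (y i) * \<gamma> t0 i ^ (y i - 1) * g i) * h * (\<Prod>j\<in>{..<n} - {i}. \<gamma> t0 j ^ y j))) (at t0)"
    by (rule has_derivative_prod[OF d])
  moreover have "(\<lambda>h. \<Sum>i\<in>{..<n}. (real (y i) * \<gamma> t0 i ^ (y i - 1) * g i) * h * (\<Prod>j\<in>{..<n} - {i}. \<gamma> t0 j ^ y j))
     = (*) (\<Sum>l<n. dmono n (\<gamma> t0) y l * g l)"
    by (auto simp: dmono_def sum_distrib_left mult_ac intro!: sum.cong)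
  ultimately show ?thesis unfolding has_field_derivative_def monomial_def by simp
qed

definition Jf :: "nat \<Rightarrow> reaction set \<Rightarrow> (reaction \<Rightarrow> real) \<Rightarrow> nat \<Rightarrow> nat \<Rightarrow> (nat \<Rightarrow> real) \<Rightarrow> real" where
  "Jf n R k i j x = (\<Sum>r\<in>R. k r * dmono n x (fst r) j * (real (snd r i) - real (fst r i)))"

lemma ma_deriv:
  assumes "\<And>l. l<n \<Longrightarrow> ((\<lambda>t. \<gamma> t l) has_real_derivative g l) (at t0)"
  shows "((\<lambda>t. mass_action n R k (\<gamma> t) i) has_real_derivative (\<Sum>l<n. Jf n R k i l (\<gamma> t0) * g l)) (at t0)"
proof -
  have "((\<lambda>t. mass_action n R k (\<gamma> t) i) has_real_derivative
     (\<Sum>r\<in>R. k r * (\<Sum>l<n. dmono n (\<gamma> t0) (fst r) l * g l) * (real (snd r i) - real (fst r i)))) (at t0)"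
    unfolding mass_action_def
    by (intro DERIV_sum DERIV_cmult_right DERIV_cmult mono_deriv assms)
  moreover have "(\<Sum>r\<in>R. k r * (\<Sum>l<n. dmono n (\<gamma> t0) (fst r) l * g l) * (real (snd r i) - real (fst r i)))
     = (\<Sum>l<n. Jf n R k i l (\<gamma> t0) * g l)"
    unfolding Jf_def sum_distrib_left sum_distrib_right
    by (subst sum.swap) (auto intro!: sum.cong simp: mult_ac)
  ultimately show ?thesis by simp
qed

lemma io_deriv:
  assumes "\<And>l. l<n \<Longrightarrow> ((\<lambda>t. \<gamma> t l) has_real_derivative g l) (at t0)"
  shows "((\<lambda>t. io_field n R k z (\<gamma> t) i) has_real_derivative (\<Sum>l<n. Jf n R k i l (\<gamma> t0) * g l)) (at t0)"
  unfolding io_field_def using ma_deriv[OF assms] by (auto intro!: derivative_eq_intros)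

lemma partial_deriv_aux:
  assumes j: "j < n"
    and D: "\<And>\<gamma> g t0. (\<And>l. l<n \<Longrightarrow> ((\<lambda>t. \<gamma> t l) has_real_derivative g l) (at t0)) \<Longrightarrow>
       ((\<lambda>t. F (\<gamma> t) i) has_real_derivative (\<Sum>l<n. Jf n R k i l (\<gamma> t0) * g l)) (at t0)"
  shows "deriv (\<lambda>t. F (x(j := t)) i) (x j) = Jf n R k i j x"
proof -
  have "((\<lambda>t. F (x(j := t)) i) has_real_derivative (\<Sum>l<n. Jf n R k i l ((x(j := x j))) * (if l = j then 1 else 0))) (at (x j))"
    by (rule D) (auto intro!: derivative_eq_intros)
  moreover have "(\<Sum>l<n. Jf n R k i l ((x(j := x j))) * (if l = j then 1 else 0)) = Jf n R k i j x"
    using j by (simp add: if_distrib cong: if_cong)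
  ultimately show ?thesis by (simp add: DERIV_imp_deriv)
qed

lemma jac_ma: "i < n \<Longrightarrow> j < n \<Longrightarrow> jacobian n (mass_action n R k) x $$ (i, j) = Jf n R k i j x"
  unfolding jacobian_def using partial_deriv_aux[where F="mass_action n R k", OF _ ma_deriv] by simp

lemma jac_io: "i < n \<Longrightarrow> j < n \<Longrightarrow> jacobian n (io_field n R k z) x $$ (i, j) = Jf n R k i j x"
  unfolding jacobian_def using partial_deriv_aux[where F="io_field n R k z", OF _ io_deriv] by simp

lemma mono_tendsto:
  assumes "\<And>l. l<n \<Longrightarrow> ((\<lambda>t. s t l) \<longlongrightarrow> L l) F"
  shows "((\<lambda>t. monomial n (s t) y) \<longlongrightarrow> monomial n L y) F"
  unfolding monomial_def using assms by (auto intro!: tendsto_intros)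

lemma dmono_tendsto:
  assumes "\<And>l. l<n \<Longrightarrow> ((\<lambda>t. s t l) \<longlongrightarrow> L l) F" and "j < n"
  shows "((\<lambda>t. dmono n (s t) y j) \<longlongrightarrow> dmono n L y j) F"
  unfolding dmono_def using assms by (auto intro!: tendsto_intros)

lemma Jf_tendsto:
  assumes "\<And>l. l<n \<Longrightarrow> ((\<lambda>t. s t l) \<longlongrightarrow> L l) F" and "j < n"
  shows "((\<lambda>t. Jf n R k i j (s t)) \<longlongrightarrow> Jf n R k i j L) F"
  unfolding Jf_def using assms by (auto intro!: tendsto_intros dmono_tendsto)

lemma ma_tendsto:
  assumes "\<And>l. l<n \<Longrightarrow> ((\<lambda>t. s t l) \<longlongrightarrow> L l) F"
  shows "((\<lambda>t. mass_action n R k (s t) i) \<longlongrightarrow> mass_action n R k L i) F"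
  unfolding mass_action_def using assms by (auto intro!: tendsto_intros mono_tendsto)

lemma det_tendsto:
  fixes M :: "'b \<Rightarrow> nat \<Rightarrow> nat \<Rightarrow> real"
  assumes "\<And>i j. i<n \<Longrightarrow> j<n \<Longrightarrow> ((\<lambda>t. M t i j) \<longlongrightarrow> ML i j) F"
  shows "((\<lambda>t. det (mat n n (\<lambda>(i,j). M t i j))) \<longlongrightarrow> det (mat n n (\<lambda>(i,j). ML i j))) F"
proof -
  have eq: "\<And>N. det (mat n n (\<lambda>(i,j). N i j)) = (\<Sum>p\<in>{p. p permutes {0..<n}}. signof p * (\<Prod>i=0..<n. N i (p i)))"
    by (subst det_def'[of _ n]) (auto intro!: sum.cong prod.cong)
  have pi: "p permutes {0..<n} \<Longrightarrow> i < n \<Longrightarrow> p i < n" for p i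
    by (metis atLeastLessThan_iff permutes_in_image zero_le)
  show ?thesis unfolding eq
    apply (rule tendsto_sum) apply (rule tendsto_mult_left) apply (rule tendsto_prod)
    using assms pi by auto
qed

definition nrm :: "nat \<Rightarrow> (nat \<Rightarrow> real) \<Rightarrow> real" where
  "nrm n v = (\<Sum>l<n. \<bar>v l\<bar>)"

lemma nrm_ge: "l < n \<Longrightarrow> \<bar>v l\<bar> \<le> nrm n v"
  unfolding nrm_def by (rule member_le_sum) auto

lemma nrm_nonneg: "nrm n v \<ge> 0"
  unfolding nrm_def by (auto intro: sum_nonneg)

lemma nrm_triangle: "nrm n (\<lambda>l. a l + b l) \<le> nrm n a + nrm n b"
  unfolding nrm_def sum.distrib[symmetric] by (rule sum_mono) (rule abs_triangle_ineq)

lemma seq_cont_nbhd: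
  fixes g :: "(nat \<Rightarrow> real) \<Rightarrow> real"
  assumes cont: "\<And>s. (\<And>l. l<n \<Longrightarrow> (\<lambda>m. s m l) \<longlonglongrightarrow> x0 l) \<Longrightarrow> (\<lambda>m. g (s m)) \<longlonglongrightarrow> g x0"
    and e: "e > 0"
  shows "\<exists>\<rho>>0. \<forall>\<xi>. nrm n (\<lambda>l. \<xi> l - x0 l) \<le> \<rho> \<longrightarrow> \<bar>g \<xi> - g x0\<bar> < e"
proof (rule ccontr)
  assume A: "\<not> ?thesis"
  have neg: "\<exists>\<xi>. nrm n (\<lambda>l. \<xi> l - x0 l) \<le> \<rho> \<and> \<bar>g \<xi> - g x0\<bar> \<ge> e" if "\<rho> > 0" for \<rho>
  proof -
    from A have "\<forall>\<rho>>0. \<exists>\<xi>. nrm n (\<lambda>l. \<xi> l - x0 l) \<le> \<rho> \<and> \<not> \<bar>g \<xi> - g x0\<bar> < e" by simp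
    then have "\<exists>\<xi>. nrm n (\<lambda>l. \<xi> l - x0 l) \<le> \<rho> \<and> \<not> \<bar>g \<xi> - g x0\<bar> < e" using that by blast
    then show ?thesis by (simp add: not_less)
  qed
  have "\<exists>\<xi>. nrm n (\<lambda>l. \<xi> l - x0 l) \<le> 1 / (real m + 1) \<and> \<bar>g \<xi> - g x0\<bar> \<ge> e" for m
    by (rule neg) simp
  then have "\<forall>m. \<exists>\<xi>. nrm n (\<lambda>l. \<xi> l - x0 l) \<le> 1 / (real m + 1) \<and> \<bar>g \<xi> - g x0\<bar> \<ge> e" by blast
  from choice[OF this] obtain s where s1: "\<forall>m. nrm n (\<lambda>l. s m l - x0 l) \<le> 1 / (real m + 1) \<and> \<bar>g (s m) - g x0\<bar> \<ge> e"
    by blast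
  then have s: "\<And>m. nrm n (\<lambda>l. s m l - x0 l) \<le> 1 / (real m + 1)" "\<And>m. \<bar>g (s m) - g x0\<bar> \<ge> e"
    by auto
  have lim1: "(\<lambda>m. 1 / (real m + 1)) \<longlonglongrightarrow> 0"
  proof -
    have "(\<lambda>m. 1 / (real m + 1)) = (\<lambda>m. inverse (real (Suc m)))"
      by (rule ext) (simp add: inverse_eq_divide)
    then show ?thesis using LIMSEQ_inverse_real_of_nat by simp
  qed
  have lim2: "(\<lambda>m. - (1 / (real m + 1))) \<longlonglongrightarrow> 0"
    using tendsto_minus[OF lim1] by simp
  have "(\<lambda>m. s m l) \<longlonglongrightarrow> x0 l" if l: "l < n" for l
  proof -
    have b: "\<bar>s m l - x0 l\<bar> \<le> 1 / (real m + 1)" for m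
      using nrm_ge[OF l, of "\<lambda>l. s m l - x0 l"] s(1)[of m] by simp
    have "(\<lambda>m. s m l - x0 l) \<longlonglongrightarrow> 0"
    proof (rule tendsto_sandwich[OF _ _ lim2 lim1])
      show "\<forall>\<^sub>F m in sequentially. - (1 / (real m + 1)) \<le> s m l - x0 l"
      proof (rule always_eventually, rule allI)
        fix m
        have "x0 l - s m l \<le> 1 / (real m + 1)" using b[of m] by (simp add: abs_le_iff)
        then show "- (1 / (real m + 1)) \<le> s m l - x0 l" by linarith
      qed
      show "\<forall>\<^sub>F m in sequentially. s m l - x0 l \<le> 1 / (real m + 1)"
        by (rule always_eventually) (use b in \<open>auto simp: abs_le_iff\<close>)
    qed
    then show ?thesis by (rule LIM_zero_cancel)
  qed
  then have "(\<lambda>m. g (s m)) \<longlonglongrightarrow> g x0" by (rule cont)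
  then have "(\<lambda>m. g (s m) - g x0) \<longlonglongrightarrow> 0" by (rule LIM_zero)
  then have "(\<lambda>m. \<bar>g (s m) - g x0\<bar>) \<longlonglongrightarrow> 0" by (rule tendsto_rabs_zero)
  from order_tendstoD(2)[OF this e] have "eventually (\<lambda>m. \<bar>g (s m) - g x0\<bar> < e) sequentially" .
  then obtain N where "\<And>m. m \<ge> N \<Longrightarrow> \<bar>g (s m) - g x0\<bar> < e" unfolding eventually_sequentially by blast
  from this[of N] s(2)[of N] show False by simp
qed


lemma det_mat_expand:
  fixes N :: "nat \<Rightarrow> nat \<Rightarrow> 'a :: comm_ring_1"
  shows "det (mat n n (\<lambda>(i,j). N i j)) = (\<Sum>p\<in>{p. p permutes {0..<n}}. signof p * (\<Prod>i=0..<n. N i (p i)))"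
  by (subst det_def'[of _ n]) (auto intro!: sum.cong prod.cong)

lemma permutes_lt: "(p::nat\<Rightarrow>nat) permutes {0..<n} \<Longrightarrow> i < n \<Longrightarrow> p i < n"
  using permutes_in_image[of p "{0..<n}" i] by auto

lemma cb_zero:
  fixes a b :: "'r \<Rightarrow> nat \<Rightarrow> real" and S :: "'r set"
  assumes fin: "finite S"
    and H: "\<And>\<tau>. \<tau> \<in> Pi\<^sub>E {0..<n} (\<lambda>_. S) \<Longrightarrow> inj_on \<tau> {0..<n} \<Longrightarrow>
      det (mat n n (\<lambda>(i,j). a (\<tau> j) i)) * det (mat n n (\<lambda>(i,j). b (\<tau> j) i)) = 0"
  shows "det (mat n n (\<lambda>(i,j). \<Sum>r\<in>S. a r i * b r j)) = 0"
proof -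
  define Pn where "Pn = {p. p permutes {0..<n}}"
  define T where "T = Pi\<^sub>E {0..<n} (\<lambda>_. S)"
  define Inj where "Inj = {\<tau>\<in>T. inj_on \<tau> {0..<n}}"
  define P where "P \<tau> = (\<Prod>i=0..<n. a (\<tau> i) i)" for \<tau>
  define D where "D \<tau> = det (mat n n (\<lambda>(i,j). b (\<tau> i) j))" for \<tau>
  have finT: "finite T" unfolding T_def using fin by (simp add: finite_PiE)
  have finInj: "finite Inj" unfolding Inj_def using finT by simp
  have finPn: "finite Pn" unfolding Pn_def by (simp add: finite_permutations)
  have step1: "det (mat n n (\<lambda>(i,j). \<Sum>r\<in>S. a r i * b r j)) = (\<Sum>\<tau>\<in>T. P \<tau> * D \<tau>)"
  proof -
    have "det (mat n n (\<lambda>(i,j). \<Sum>r\<in>S. a r i * b r j)) =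
        (\<Sum>p\<in>Pn. signof p * (\<Prod>i=0..<n. \<Sum>r\<in>S. a r i * b r (p i)))"
      unfolding det_mat_expand Pn_def ..
    also have "\<dots> = (\<Sum>p\<in>Pn. signof p * (\<Sum>\<tau>\<in>T. \<Prod>i=0..<n. a (\<tau> i) i * b (\<tau> i) (p i)))"
      unfolding T_def using fin by (subst prod_sum_PiE) auto
    also have "\<dots> = (\<Sum>\<tau>\<in>T. \<Sum>p\<in>Pn. P \<tau> * (signof p * (\<Prod>i=0..<n. b (\<tau> i) (p i))))"
      unfolding P_def sum_distrib_left prod.distrib
      by (subst sum.swap) (auto intro!: sum.cong simp: mult_ac)
    also have "\<dots> = (\<Sum>\<tau>\<in>T. P \<tau> * D \<tau>)"
      unfolding D_def det_mat_expand Pn_def sum_distrib_left ..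
    finally show ?thesis .
  qed
  have D0: "D \<tau> = 0" if "\<tau> \<in> T" "\<not> inj_on \<tau> {0..<n}" for \<tau>
  proof -
    from that(2) obtain i j where ij: "i < n" "j < n" "i \<noteq> j" "\<tau> i = \<tau> j"
      unfolding inj_on_def by auto
    show ?thesis unfolding D_def
      by (rule det_identical_rows[of _ n i j]) (use ij in \<open>auto simp: row_mat\<close>)
  qed
  have step2: "(\<Sum>\<tau>\<in>T. P \<tau> * D \<tau>) = (\<Sum>\<tau>\<in>Inj. P \<tau> * D \<tau>)"
    unfolding Inj_def using finT D0 by (intro sum.mono_neutral_right) auto
  have step3: "(\<Sum>\<tau>\<in>Inj. P \<tau> * D \<tau>) = (\<Sum>\<tau>\<in>Inj. P (\<tau> \<circ> \<pi>) * (signof \<pi> * D \<tau>))"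
    if pi: "\<pi> \<in> Pn" for \<pi>
  proof -
    have perm: "\<pi> permutes {0..<n}" using pi unfolding Pn_def by simp
    have bij: "bij_betw (\<lambda>\<tau>. \<tau> \<circ> \<pi>) Inj Inj"
    proof (rule bij_betw_byWitness[where f'="\<lambda>\<tau>. \<tau> \<circ> Hilbert_Choice.inv \<pi>"])
      show "\<forall>\<tau>\<in>Inj. \<tau> \<circ> \<pi> \<circ> Hilbert_Choice.inv \<pi> = \<tau>"
        using permutes_inv_o(1)[OF perm] by (simp add: o_assoc[symmetric])
      show "\<forall>\<tau>\<in>Inj. \<tau> \<circ> Hilbert_Choice.inv \<pi> \<circ> \<pi> = \<tau>"
        using permutes_inv_o(2)[OF perm] by (simp add: o_assoc[symmetric])
      have inv: "Hilbert_Choice.inv \<pi> permutes {0..<n}" using permutes_inv[OF perm] .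
      have gen: "\<tau> \<circ> q \<in> Inj" if "\<tau> \<in> Inj" "q permutes {0..<n}" for \<tau> q
      proof -
        have "\<tau> \<circ> q \<in> T" using that permutes_lt[OF that(2)] permutes_not_in[OF that(2)]
          unfolding Inj_def T_def PiE_def Pi_def extensional_def by auto
        moreover have "inj_on (\<tau> \<circ> q) {0..<n}"
          using that permutes_inj_on[OF that(2)] permutes_image[OF that(2)]
          unfolding Inj_def by (auto intro: comp_inj_on)
        ultimately show ?thesis unfolding Inj_def by simp
      qed
      show "(\<lambda>\<tau>. \<tau> \<circ> \<pi>) ` Inj \<subseteq> Inj" using gen perm by auto
      show "(\<lambda>\<tau>. \<tau> \<circ> Hilbert_Choice.inv \<pi>) ` Inj \<subseteq> Inj" using gen inv by auto
    qed
    have "(\<Sum>\<tau>\<in>Inj. P \<tau> * D \<tau>) = (\<Sum>\<tau>\<in>Inj. P (\<tau> \<circ> \<pi>) * D (\<tau> \<circ> \<pi>))"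
      using sum.reindex_bij_betw[OF bij, of "\<lambda>\<tau>. P \<tau> * D \<tau>"] by simp
    also have "\<dots> = (\<Sum>\<tau>\<in>Inj. P (\<tau> \<circ> \<pi>) * (signof \<pi> * D \<tau>))"
    proof (rule sum.cong[OF refl])
      fix \<tau> assume "\<tau> \<in> Inj"
      have "D (\<tau> \<circ> \<pi>) = det (mat n n (\<lambda>(i,j). mat n n (\<lambda>(i,j). b (\<tau> i) j) $$ (\<pi> i, j)))"
        unfolding D_def using permutes_lt[OF perm]
        by (intro arg_cong[where f=det]) (auto intro!: eq_matI)
      also have "\<dots> = signof \<pi> * D \<tau>"
        unfolding D_def by (rule det_permute_rows[OF _ perm]) auto
      finally show "P (\<tau> \<circ> \<pi>) * D (\<tau> \<circ> \<pi>) = P (\<tau> \<circ> \<pi>) * (signof \<pi> * D \<tau>)" by simp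
    qed
    finally show ?thesis .
  qed
  have "of_nat (card Pn) * (\<Sum>\<tau>\<in>Inj. P \<tau> * D \<tau>) = (\<Sum>\<pi>\<in>Pn. \<Sum>\<tau>\<in>Inj. P \<tau> * D \<tau>)"
    by simp
  also have "\<dots> = (\<Sum>\<pi>\<in>Pn. \<Sum>\<tau>\<in>Inj. P (\<tau> \<circ> \<pi>) * (signof \<pi> * D \<tau>))"
    using step3 by (rule sum.cong[OF refl])
  also have "\<dots> = (\<Sum>\<tau>\<in>Inj. D \<tau> * (\<Sum>\<pi>\<in>Pn. signof \<pi> * P (\<tau> \<circ> \<pi>)))"
    by (subst sum.swap) (auto intro!: sum.cong simp: sum_distrib_left mult_ac)
  also have "\<dots> = (\<Sum>\<tau>\<in>Inj. D \<tau> * det (mat n n (\<lambda>(i,j). a (\<tau> j) i)))"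
    unfolding det_mat_expand P_def Pn_def by simp
  also have "\<dots> = 0"
  proof (rule sum.neutral, rule ballI)
    fix \<tau> assume t: "\<tau> \<in> Inj"
    have "D \<tau> = det (mat n n (\<lambda>(i,j). b (\<tau> j) i))"
    proof -
      have "D \<tau> = det (transpose_mat (mat n n (\<lambda>(i,j). b (\<tau> i) j)))"
        unfolding D_def by (rule det_transpose[symmetric]) auto
      also have "transpose_mat (mat n n (\<lambda>(i,j). b (\<tau> i) j)) = mat n n (\<lambda>(i,j). b (\<tau> j) i)"
        by (auto intro!: eq_matI)
      finally show ?thesis .
    qed
    then show "D \<tau> * det (mat n n (\<lambda>(i,j). a (\<tau> j) i)) = 0"
      using H[of \<tau>] t unfolding Inj_def T_def by (simp add: mult.commute)
  qed
  finally have "of_nat (card Pn) * (\<Sum>\<tau>\<in>Inj. P \<tau> * D \<tau>) = 0" .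
  moreover have "card Pn = fact n" unfolding Pn_def by (rule card_permutations) auto
  ultimately have "(\<Sum>\<tau>\<in>Inj. P \<tau> * D \<tau>) = 0" by simp
  then show ?thesis using step1 step2 by simp
qed


lemma det_scale:
  fixes M :: "nat \<Rightarrow> nat \<Rightarrow> real"
  shows "det (mat n n (\<lambda>(i,j). c j * d i * M i j)) = (\<Prod>j=0..<n. c j) * (\<Prod>i=0..<n. d i) * det (mat n n (\<lambda>(i,j). M i j))"
proof -
  have "(\<Prod>i=0..<n. c (p i) * d i * M i (p i)) = (\<Prod>j=0..<n. c j) * (\<Prod>i=0..<n. d i) * (\<Prod>i=0..<n. M i (p i))"
    if p: "p permutes {0..<n}" for p
  proof -
    have "(\<Prod>i=0..<n. c (p i)) = (\<Prod>j=0..<n. c j)"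
      using prod.permute[OF p, of c] by (simp add: comp_def)
    then show ?thesis by (simp add: prod.distrib)
  qed
  then show ?thesis unfolding det_mat_expand sum_distrib_left
    by (auto intro!: sum.cong simp: mult_ac)
qed

lemma det_zero_col:
  fixes M :: "nat \<Rightarrow> nat \<Rightarrow> real"
  assumes j0: "j0 < n" and z: "\<And>i. i < n \<Longrightarrow> M i j0 = 0"
  shows "det (mat n n (\<lambda>(i,j). M i j)) = 0"
proof -
  have pz: "(\<Prod>i=0..<n. M i (p i)) = 0" if p: "p permutes {0..<n}" for p
  proof (rule prod_zero)
    have "Hilbert_Choice.inv p j0 < n" using permutes_lt[OF permutes_inv[OF p] j0] .
    moreover have "p (Hilbert_Choice.inv p j0) = j0" using permutes_inverses(1)[OF p] by simp
    ultimately show "\<exists>i\<in>{0..<n}. M i (p i) = 0" using z by (intro bexI[of _ "Hilbert_Choice.inv p j0"]) auto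
  qed simp
  show ?thesis unfolding det_mat_expand by (simp add: pz)
qed

lemma dmono_pos:
  assumes j: "j < n" and x: "x j > 0"
  shows "dmono n x y j = real (y j) * monomial n x y / x j"
proof -
  have m: "monomial n x y = x j ^ y j * (\<Prod>l\<in>{..<n}-{j}. x l ^ y l)"
    unfolding monomial_def using j by (subst prod.remove[of _ j]) auto
  show ?thesis
  proof (cases "y j = 0")
    case True then show ?thesis by (simp add: dmono_def)
  next
    case False
    then have "x j ^ y j = x j * x j ^ (y j - 1)" by (metis power_eq_if)
    then show ?thesis unfolding dmono_def m using x by (simp add: field_simps)
  qed
qed


lemma detB_zero:
  fixes n :: nat and R :: "reaction set" and k :: "reaction \<Rightarrow> real" and x :: "nat \<Rightarrow> real"
  assumes n2: "n \<ge> 2"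
    and RN: "reaction_network n R"
    and hyp: "\<And>rs :: nat \<Rightarrow> reaction.
       (\<forall>i<n. rs i \<in> homeostasis_network n R) \<Longrightarrow> inj_on rs {0..<n} \<Longrightarrow>
       det (mat n n (\<lambda>(i, j). real (fst (rs j) i))) *
       det (mat n n (\<lambda>(i, j). real (snd (rs j) i) - real (fst (rs j) i))) = 0"
    and pos: "positive_vec n x"
  shows "det (B_matrix n R k x) = 0"
proof -
  have finR: "finite R" using RN unfolding reaction_network_def by auto
  define s0 :: reaction where "s0 = (unit_complex (n-1), unit_complex 0)"
  define hat :: "reaction \<Rightarrow> reaction" where "hat r = (fst r, (snd r)(0 := fst r 0))" for r
  define hr :: "reaction option \<Rightarrow> reaction" where "hr s = (case s of None \<Rightarrow> s0 | Some r \<Rightarrow> hat r)" for s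
  define \<Delta> :: "reaction \<Rightarrow> nat \<Rightarrow> real" where "\<Delta> s i = real (snd s i) - real (fst s i)" for s i
  define ca :: "reaction option \<Rightarrow> real" where "ca s = (case s of None \<Rightarrow> 1 | Some r \<Rightarrow> k r * monomial n x (fst r))" for s
  define cb :: "reaction option \<Rightarrow> real" where "cb s = (case s of None \<Rightarrow> x (n-1) | Some r \<Rightarrow> 1)" for s
  define a where "a s i = ca s * \<Delta> (hr s) i" for s i
  define b where "b s j = cb s * (1 / x j) * real (fst (hr s) j)" for s j
  define I where "I = insert None (Some ` R)"
  define N where "N = mat n n (\<lambda>(i,j). \<Sum>s\<in>I. a s i * b s j)"
  have xpos: "\<And>l. l < n \<Longrightarrow> x l > 0" using pos unfolding positive_vec_def by auto
  have n1: "n - 1 < n" "n - 1 \<noteq> 0" using n2 by auto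
  have hat_ne: "hat r \<noteq> s0" for r
  proof
    assume h: "hat r = s0"
    then have "fst r = unit_complex (n-1)" unfolding hat_def s0_def by simp
    then have "fst r 0 = 0" using n1 unfolding unit_complex_def by simp
    moreover from arg_cong[OF h, of snd] have "(snd r)(0 := fst r 0) = unit_complex 0"
      by (simp only: hat_def s0_def snd_conv)
    from fun_cong[OF this, of 0] have "fst r 0 = 1" unfolding unit_complex_def by simp
    ultimately show False by simp
  qed
  have s0_nt: "snd s0 \<noteq> fst s0"
  proof
    assume "snd s0 = fst s0"
    then have "unit_complex 0 0 = unit_complex (n-1) 0" unfolding s0_def by simp
    then show False using n1 unfolding unit_complex_def by simp
  qed
  have finI: "finite I" unfolding I_def using finR by simp
  have Nent: "N $$ (i,j) = \<Delta> s0 i * (if j = n-1 then 1 else 0) +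
      (\<Sum>r\<in>R. k r * monomial n x (fst r) * \<Delta> (hat r) i * (real (fst r j) / x j))"
    if ij: "i < n" "j < n" for i j
  proof -
    have "N $$ (i,j) = a None i * b None j + (\<Sum>s\<in>Some ` R. a s i * b s j)"
      unfolding N_def I_def using ij finR by (simp add: sum.insert)
    also have "(\<Sum>s\<in>Some ` R. a s i * b s j) = (\<Sum>r\<in>R. a (Some r) i * b (Some r) j)"
      by (subst sum.reindex) auto
    also have "\<dots> = (\<Sum>r\<in>R. k r * monomial n x (fst r) * \<Delta> (hat r) i * (real (fst r j) / x j))"
      unfolding a_def b_def ca_def cb_def hr_def by (auto intro!: sum.cong simp: hat_def)
    also have "a None i * b None j = \<Delta> s0 i * (if j = n-1 then 1 else 0)"
      unfolding a_def b_def ca_def cb_def hr_def s0_def using xpos[OF n1(1)]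
      by (auto simp: unit_complex_def)
    finally show ?thesis .
  qed
  have row0: "N $$ (0,j) = (if j = n-1 then 1 else 0)" if j: "j < n" for j
  proof -
    have "\<Delta> (hat r) 0 = 0" for r unfolding \<Delta>_def hat_def by simp
    moreover have "\<Delta> s0 0 = 1" unfolding \<Delta>_def s0_def unit_complex_def using n1 by simp
    ultimately show ?thesis using Nent[of 0 j] j n2 by simp
  qed
  have rowi: "N $$ (i,j) = Jf n R k i j x" if ij: "0 < i" "i < n" "j < n - 1" for i j
  proof -
    have "\<Delta> (hat r) i = \<Delta> r i" for r unfolding \<Delta>_def hat_def using ij by simp
    moreover have "(if j = n-1 then 1 else 0) = (0::real)" using ij by simp
    moreover have "Jf n R k i j x = (\<Sum>r\<in>R. k r * monomial n x (fst r) * \<Delta> r i * (real (fst r j) / x j))"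
      unfolding Jf_def \<Delta>_def using dmono_pos[of j n x] xpos[of j] ij
      by (auto intro!: sum.cong simp: field_simps)
    ultimately show ?thesis using Nent[of i j] ij by simp
  qed
  have Ncar: "N \<in> carrier_mat n n" unfolding N_def by simp
  have del: "mat_delete N 0 (n-1) = B_matrix n R k x"
  proof (rule eq_matI)
    fix i j assume ij: "i < dim_row (B_matrix n R k x)" "j < dim_col (B_matrix n R k x)"
    then have ij': "i < n - 1" "j < n - 1" unfolding B_matrix_def by auto
    have "mat_delete N 0 (n-1) $$ (i,j) = N $$ (Suc i, j)"
      unfolding mat_delete_def using ij' Ncar by auto
    also have "\<dots> = Jf n R k (Suc i) j x" using rowi[of "Suc i" j] ij' by simp
    also have "\<dots> = B_matrix n R k x $$ (i,j)"
      unfolding B_matrix_def using ij' jac_ma[of "Suc i" n j R k x] by auto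
    finally show "mat_delete N 0 (n-1) $$ (i,j) = B_matrix n R k x $$ (i,j)" .
  qed (use Ncar in \<open>auto simp: B_matrix_def\<close>)
  have lap: "det N = (-1)^(n-1) * det (B_matrix n R k x)"
  proof -
    have "det N = (\<Sum>j<n. N $$ (0,j) * cofactor N 0 j)"
      by (rule laplace_expansion_row[OF Ncar]) (use n2 in auto)
    also have "\<dots> = (\<Sum>j<n. if j = n-1 then cofactor N 0 j else 0)"
      by (rule sum.cong) (auto simp: row0)
    also have "\<dots> = cofactor N 0 (n-1)" using n1 by simp
    finally show ?thesis unfolding cofactor_def del by simp
  qed
  have H: "det (mat n n (\<lambda>(i,j). a (\<tau> j) i)) * det (mat n n (\<lambda>(i,j). b (\<tau> j) i)) = 0"
    if t: "\<tau> \<in> Pi\<^sub>E {0..<n} (\<lambda>_. I)" "inj_on \<tau> {0..<n}" for \<tau>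
  proof (cases "inj_on (\<lambda>j. hr (\<tau> j)) {0..<n}")
    case False
    then obtain j1 j2 where j: "j1 < n" "j2 < n" "j1 \<noteq> j2" "hr (\<tau> j1) = hr (\<tau> j2)"
      unfolding inj_on_def by auto
    have tne: "\<tau> j1 \<noteq> \<tau> j2" using t(2) j unfolding inj_on_def by auto
    have "\<tau> j1 \<noteq> None"
    proof
      assume "\<tau> j1 = None"
      with tne obtain r where "\<tau> j2 = Some r" by (cases "\<tau> j2") auto
      with j(4) \<open>\<tau> j1 = None\<close> show False using hat_ne[of r] unfolding hr_def by simp
    qed
    moreover have "\<tau> j2 \<noteq> None"
    proof
      assume "\<tau> j2 = None"
      with tne obtain r where "\<tau> j1 = Some r" by (cases "\<tau> j1") auto
      with j(4) \<open>\<tau> j2 = None\<close> show False using hat_ne[of r] unfolding hr_def by simp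
    qed
    ultimately have "cb (\<tau> j1) = 1" "cb (\<tau> j2) = 1" unfolding cb_def by auto
    then have "det (mat n n (\<lambda>(i,j). b (\<tau> j) i)) = 0"
      using j by (intro det_identical_columns[of _ n j1 j2]) (auto simp: b_def intro!: eq_vecI)
    then show ?thesis by simp
  next
    case True
    define DA where "DA = det (mat n n (\<lambda>(i,j). \<Delta> (hr (\<tau> j)) i))"
    define DY where "DY = det (mat n n (\<lambda>(i,j). real (fst (hr (\<tau> j)) i)))"
    have eA: "det (mat n n (\<lambda>(i,j). a (\<tau> j) i)) = (\<Prod>j=0..<n. ca (\<tau> j)) * (\<Prod>i=0..<n. 1) * DA"
      unfolding DA_def a_def using det_scale[where c="\<lambda>j. ca (\<tau> j)" and d="\<lambda>i. 1" and M="\<lambda>i j. \<Delta> (hr (\<tau> j)) i" and n=n]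
      by simp
    have eB: "det (mat n n (\<lambda>(i,j). b (\<tau> j) i)) = (\<Prod>j=0..<n. cb (\<tau> j)) * (\<Prod>i=0..<n. 1 / x i) * DY"
      unfolding DY_def b_def using det_scale[where c="\<lambda>j. cb (\<tau> j)" and d="\<lambda>i. 1 / x i" and M="\<lambda>i j. real (fst (hr (\<tau> j)) i)" and n=n]
      by simp
    have "DA * DY = 0"
    proof (cases "\<exists>j<n. snd (hr (\<tau> j)) = fst (hr (\<tau> j))")
      case True
      then obtain j0 where j0: "j0 < n" "snd (hr (\<tau> j0)) = fst (hr (\<tau> j0))" by auto
      have "DA = 0" unfolding DA_def
        by (rule det_zero_col[OF j0(1)]) (simp add: \<Delta>_def j0(2))
      then show ?thesis by simp
    next
      case False
      have mem: "\<forall>i<n. hr (\<tau> i) \<in> homeostasis_network n R"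
      proof (intro allI impI)
        fix i assume i: "i < n"
        then have ti: "\<tau> i \<in> I" using t(1) by auto
        show "hr (\<tau> i) \<in> homeostasis_network n R"
        proof (cases "\<tau> i")
          case None
          then show ?thesis unfolding hr_def homeostasis_network_def s0_def by simp
        next
          case (Some r)
          then have r: "r \<in> R" using ti unfolding I_def by auto
          have "snd (hat r) \<noteq> fst (hat r)" using False i Some unfolding hr_def by auto
          then have "(snd r)(0 := fst r 0) \<noteq> fst r" unfolding hat_def by simp
          then show ?thesis using r Some unfolding hr_def hat_def homeostasis_network_def
            by (cases r) auto
        qed
      qed
      have "DY * DA = 0" unfolding DY_def DA_def \<Delta>_def
        using hyp[of "\<lambda>j. hr (\<tau> j)"] mem True by simp
      then show ?thesis by (simp add: mult.commute)
    qed
    then show ?thesis unfolding eA eB by (auto simp del: prod_zero_iff)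
  qed
  have "det N = 0" unfolding N_def by (rule cb_zero[OF finI H])
  with lap show ?thesis by simp
qed


lemma inv_exists:
  fixes M :: "nat \<Rightarrow> nat \<Rightarrow> real"
  assumes d: "det (mat n n (\<lambda>(i,j). M i j)) \<noteq> 0"
  shows "\<exists>C. (\<forall>l<n. \<forall>j<n. (\<Sum>m<n. C l m * M m j) = (if l = j then 1 else 0)) \<and>
             (\<forall>i<n. \<forall>l<n. (\<Sum>m<n. M i m * C m l) = (if i = l then 1 else 0))"
proof -
  define A where "A = mat n n (\<lambda>(i,j). M i j)"
  have A: "A \<in> carrier_mat n n" unfolding A_def by simp
  define C where "C l m = adj_mat A $$ (l,m) / det A" for l m
  have adjc: "adj_mat A \<in> carrier_mat n n" using adj_mat(1)[OF A] .
  have 1: "(\<Sum>m<n. C l m * M m j) = (if l = j then 1 else 0)" if "l < n" "j < n" for l j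
  proof -
    have "(adj_mat A * A) $$ (l,j) = (det A \<cdot>\<^sub>m 1\<^sub>m n) $$ (l,j)" using adj_mat(3)[OF A] by simp
    then have "(\<Sum>m\<in>{0..<n}. adj_mat A $$ (l,m) * M m j) = det A * (if l = j then 1 else 0)"
      using that adjc A unfolding A_def by (auto simp: scalar_prod_def)
    then show ?thesis using d unfolding C_def A_def[symmetric]
      by (auto simp: sum_divide_distrib[symmetric] atLeast0LessThan)
  qed
  have 2: "(\<Sum>m<n. M i m * C m l) = (if i = l then 1 else 0)" if "i < n" "l < n" for i l
  proof -
    have "(A * adj_mat A) $$ (i,l) = (det A \<cdot>\<^sub>m 1\<^sub>m n) $$ (i,l)" using adj_mat(2)[OF A] by simp
    then have "(\<Sum>m\<in>{0..<n}. M i m * adj_mat A $$ (m,l)) = det A * (if i = l then 1 else 0)"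
      using that adjc A unfolding A_def by (auto simp: scalar_prod_def)
    then show ?thesis using d unfolding C_def A_def[symmetric]
      by (auto simp: sum_divide_distrib[symmetric] atLeast0LessThan)
  qed
  show ?thesis using 1 2 by blast
qed

lemma left_null_zero:
  fixes M :: "nat \<Rightarrow> nat \<Rightarrow> real"
  assumes d: "det (mat n n (\<lambda>(i,j). M i j)) \<noteq> 0"
    and w: "\<And>l. l < n \<Longrightarrow> (\<Sum>m<n. w m * M m l) = 0"
    and j: "j < n"
  shows "w j = 0"
proof -
  obtain C where C2: "\<And>i l. i<n \<Longrightarrow> l<n \<Longrightarrow> (\<Sum>m<n. M i m * C m l) = (if i = l then 1 else 0)"
    using inv_exists[OF d] by blast
  have "w j = (\<Sum>i<n. w i * (if i = j then 1 else 0))" using j by (simp add: if_distrib cong: if_cong)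
  also have "\<dots> = (\<Sum>i<n. w i * (\<Sum>m<n. M i m * C m j))" using C2 j by simp
  also have "\<dots> = (\<Sum>m<n. (\<Sum>i<n. w i * M i m) * C m j)"
    by (simp add: sum_distrib_left sum_distrib_right mult_ac) (rule sum.swap)
  also have "\<dots> = 0" using w by simp
  finally show ?thesis .
qed

lemma det0_left_null:
  fixes B :: "real mat"
  assumes B: "B \<in> carrier_mat m m" and d: "det B = 0"
  shows "\<exists>u. (\<exists>i<m. u i \<noteq> 0) \<and> (\<forall>j<m. (\<Sum>i<m. u i * B $$ (i,j)) = 0)"
proof -
  have Bt: "transpose_mat B \<in> carrier_mat m m" using B by simp
  have "det (transpose_mat B) = 0" using det_transpose[OF B] d by simp
  then obtain v where v: "v \<in> carrier_vec m" "v \<noteq> 0\<^sub>v m" "transpose_mat B *\<^sub>v v = 0\<^sub>v m"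
    using det_0_iff_vec_prod_zero[OF Bt] by blast
  have "\<exists>i<m. v $ i \<noteq> 0"
  proof (rule ccontr)
    assume "\<not> ?thesis"
    then have "v = 0\<^sub>v m" using v(1) by (auto intro!: eq_vecI)
    with v(2) show False by simp
  qed
  moreover have "(\<Sum>i<m. v $ i * B $$ (i,j)) = 0" if j: "j < m" for j
  proof -
    have "(transpose_mat B *\<^sub>v v) $ j = 0" using v(3) j by simp
    then show ?thesis using j B v(1)
      by (auto simp: scalar_prod_def atLeast0LessThan mult.commute)
  qed
  ultimately show ?thesis by (intro exI[of _ "\<lambda>i. v $ i"]) auto
qed


lemma jac_io_mat: "jacobian n (io_field n R k z) x = mat n n (\<lambda>(i,j). Jf n R k i j x)"
proof (rule eq_matI)
  fix i j assume "i < dim_row (mat n n (\<lambda>(i,j). Jf n R k i j x))" "j < dim_col (mat n n (\<lambda>(i,j). Jf n R k i j x))"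
  then show "jacobian n (io_field n R k z) x $$ (i,j) = mat n n (\<lambda>(i,j). Jf n R k i j x) $$ (i,j)"
    using jac_io[of i n j R k z x] by simp
qed (auto simp: jacobian_def)

lemma stable_det:
  assumes "linearly_stable n R k x0 z0"
  shows "det (mat n n (\<lambda>(i,j). Jf n R k i j x0)) \<noteq> 0"
proof
  assume d0: "det (mat n n (\<lambda>(i,j). Jf n R k i j x0)) = 0"
  define CJ where "CJ = map_mat complex_of_real (mat n n (\<lambda>(i,j). Jf n R k i j x0))"
  have CJc: "CJ \<in> carrier_mat n n" unfolding CJ_def by simp
  have "det CJ = 0" unfolding CJ_def using d0 by (simp add: of_real_hom.hom_det)
  then obtain v where v: "v \<in> carrier_vec n" "v \<noteq> 0\<^sub>v n" "CJ *\<^sub>v v = 0\<^sub>v n"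
    using det_0_iff_vec_prod_zero[OF CJc] by blast
  have "eigenvector CJ v 0" unfolding eigenvector_def using v CJc by auto
  then have "eigenvalue CJ 0" unfolding eigenvalue_def by blast
  then have "Re 0 < (0::real)" using assms unfolding linearly_stable_def jac_io_mat CJ_def by blast
  then show False by simp
qed

lemma dmono_cong: "(\<And>l. l < n \<Longrightarrow> x l = y l) \<Longrightarrow> j < n \<Longrightarrow> dmono n x u j = dmono n y u j"
  unfolding dmono_def by (auto intro!: prod.cong)

lemma Jf_cong: "(\<And>l. l < n \<Longrightarrow> x l = y l) \<Longrightarrow> j < n \<Longrightarrow> Jf n R k i j x = Jf n R k i j y"
proof -
  assume a: "\<And>l. l < n \<Longrightarrow> x l = y l" and j: "j < n"
  have "\<And>u. dmono n x u j = dmono n y u j" using dmono_cong[where x=x and y=y and n=n, OF a j] by blast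
  then show ?thesis unfolding Jf_def by simp
qed


lemma B_entry: "i < n - 1 \<Longrightarrow> j < n - 1 \<Longrightarrow> B_matrix n R k x $$ (i,j) = Jf n R k (Suc i) j x"
  unfolding B_matrix_def using jac_ma[of "Suc i" n j R k x] by simp

lemma perfect_homeostasis:
  fixes n :: nat and R :: "reaction set" and k :: "reaction \<Rightarrow> real"
  assumes n2: "n \<ge> 2"
    and detB: "\<And>x. positive_vec n x \<Longrightarrow> det (B_matrix n R k x) = 0"
    and stab: "linearly_stable n R k x0 z0"
    and br: "equilibrium_branch n R k X d z0 x0"
  shows "\<exists>e>0. \<forall>z. \<bar>z - z0\<bar> < e \<longrightarrow> ((\<lambda>s. X s (n - 1)) has_real_derivative 0) (at z)"
proof -
  from br have d: "d > 0" and X0: "\<And>i. i<n \<Longrightarrow> X z0 i = x0 i"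
    and eq: "\<And>z. \<bar>z - z0\<bar> < d \<Longrightarrow> io_equilibrium n R k (X z) z"
    and dif: "\<And>z i. \<bar>z - z0\<bar> < d \<Longrightarrow> i < n \<Longrightarrow> (\<lambda>s. X s i) differentiable (at z)"
    unfolding equilibrium_branch_def by auto
  have dJ0: "det (mat n n (\<lambda>(i,j). Jf n R k i j x0)) \<noteq> 0" using stable_det[OF stab] .
  have cont: "((\<lambda>s. X s l) \<longlongrightarrow> x0 l) (at z0)" if l: "l<n" for l
  proof -
    from dif[of z0 l] d l obtain D where "((\<lambda>s. X s l) has_real_derivative D) (at z0)"
      unfolding real_differentiable_def by auto
    then have "isCont (\<lambda>s. X s l) z0" by (rule DERIV_isCont)
    then show ?thesis using X0[OF l] unfolding isCont_def by simp
  qed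
  have "((\<lambda>s. det (mat n n (\<lambda>(i,j). Jf n R k i j (X s)))) \<longlongrightarrow> det (mat n n (\<lambda>(i,j). Jf n R k i j x0))) (at z0)"
    by (rule det_tendsto) (rule Jf_tendsto[OF cont])
  then have "eventually (\<lambda>s. det (mat n n (\<lambda>(i,j). Jf n R k i j (X s))) \<noteq> 0) (at z0)"
    using dJ0 by (rule tendsto_imp_eventually_ne)
  then obtain e1 where e1: "e1 > 0"
    "\<And>s. s \<noteq> z0 \<Longrightarrow> dist s z0 < e1 \<Longrightarrow> det (mat n n (\<lambda>(i,j). Jf n R k i j (X s))) \<noteq> 0"
    unfolding eventually_at by blast
  have detX: "det (mat n n (\<lambda>(i,j). Jf n R k i j (X s))) \<noteq> 0" if s: "\<bar>s - z0\<bar> < e1" for s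
  proof (cases "s = z0")
    case True
    have "mat n n (\<lambda>(i,j). Jf n R k i j (X z0)) = mat n n (\<lambda>(i,j). Jf n R k i j x0)"
      using Jf_cong[of n "X z0" x0] X0 by (auto intro!: eq_matI)
    then show ?thesis using True dJ0 by simp
  next
    case False
    then show ?thesis using e1(2)[of s] s by (simp add: dist_real_def)
  qed
  define e where "e = min d e1"
  show ?thesis
  proof (intro exI[of _ e] conjI allI impI)
    show "e > 0" unfolding e_def using d e1 by simp
    fix z assume z: "\<bar>z - z0\<bar> < e"
    then have zd: "\<bar>z - z0\<bar> < d" and ze: "\<bar>z - z0\<bar> < e1" unfolding e_def by auto
    have pos: "positive_vec n (X z)" using eq[OF zd] unfolding io_equilibrium_def by simp
    have "\<forall>l. \<exists>D. l < n \<longrightarrow> ((\<lambda>s. X s l) has_real_derivative D) (at z)"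
      using dif[OF zd] unfolding real_differentiable_def by blast
    from choice[OF this] obtain D where D: "\<And>l. l<n \<Longrightarrow> ((\<lambda>s. X s l) has_real_derivative D l) (at z)"
      by blast
    have lin: "(\<Sum>l<n. Jf n R k m l (X z) * D l) = - (if m = 0 then 1 else 0)" if m: "m < n" for m
    proof -
      have der: "((\<lambda>s. io_field n R k s (X s) m) has_real_derivative
          (\<Sum>l<n. Jf n R k m l (X z) * D l) + (if m = 0 then 1 else 0)) (at z)"
      proof (cases "m = 0")
        case True
        show ?thesis unfolding io_field_def using True
          by (auto intro!: DERIV_add ma_deriv D DERIV_ident)
      next
        case False
        show ?thesis unfolding io_field_def using False
          by (auto intro!: ma_deriv D)
      qed
      have "((\<lambda>s. 0) has_real_derivative (\<Sum>l<n. Jf n R k m l (X z) * D l) + (if m = 0 then 1 else 0)) (at z)"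
      proof (rule has_field_derivative_transform_within_open[OF der])
        show "open {s. \<bar>s - z0\<bar> < d}" by (rule open_Collect_less) (auto intro!: continuous_intros)
        show "z \<in> {s. \<bar>s - z0\<bar> < d}" using zd by simp
        fix s assume "s \<in> {s. \<bar>s - z0\<bar> < d}"
        then show "io_field n R k s (X s) m = 0" using eq m unfolding io_equilibrium_def by auto
      qed
      moreover have "((\<lambda>s. 0) has_real_derivative 0) (at z)" by simp
      ultimately have "(\<Sum>l<n. Jf n R k m l (X z) * D l) + (if m = 0 then 1 else 0) = 0"
        by (rule DERIV_unique)
      then show ?thesis by simp
    qed
    have Bc: "B_matrix n R k (X z) \<in> carrier_mat (n-1) (n-1)" unfolding B_matrix_def by simp
    obtain u where u: "\<exists>i<n-1. u i \<noteq> 0" "\<And>j. j<n-1 \<Longrightarrow> (\<Sum>i<n-1. u i * B_matrix n R k (X z) $$ (i,j)) = 0"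
      using det0_left_null[OF Bc detB[OF pos]] by blast
    define w where "w m = (if m = 0 then 0 else u (m - 1))" for m
    have nS: "n = Suc (n - 1)" using n2 by simp
    have wsum: "(\<Sum>m<n. w m * f m) = (\<Sum>i<n-1. u i * f (Suc i))" for f :: "nat \<Rightarrow> real"
      by (subst nS) (simp only: sum.lessThan_Suc_shift w_def, simp)
    have wJ: "(\<Sum>m<n. w m * Jf n R k m l (X z)) = 0" if l: "l < n - 1" for l
      unfolding wsum using u(2)[OF l] B_entry[OF _ l] by simp
    have c: "(\<Sum>m<n. w m * Jf n R k m (n-1) (X z)) \<noteq> 0"
    proof
      assume c0: "(\<Sum>m<n. w m * Jf n R k m (n-1) (X z)) = 0"
      have all0: "(\<Sum>m<n. w m * Jf n R k m l (X z)) = 0" if "l < n" for l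
      proof (cases "l = n - 1")
        case True then show ?thesis using c0 by simp
      next
        case False then show ?thesis using that wJ by simp
      qed
      have wz: "w j = 0" if "j < n" for j
        by (rule left_null_zero[where M="\<lambda>i j. Jf n R k i j (X z)", OF detX[OF ze] all0 that])
      have "u i = 0" if "i < n - 1" for i using wz[of "Suc i"] that unfolding w_def by simp
      with u(1) show False by blast
    qed
    have "(\<Sum>m<n. w m * (\<Sum>l<n. Jf n R k m l (X z) * D l)) = (\<Sum>m<n. (0::real))"
      by (rule sum.cong) (auto simp: lin w_def)
    then have "(\<Sum>m<n. w m * (\<Sum>l<n. Jf n R k m l (X z) * D l)) = 0" by simp
    also have "(\<Sum>m<n. w m * (\<Sum>l<n. Jf n R k m l (X z) * D l)) = (\<Sum>l<n. D l * (\<Sum>m<n. w m * Jf n R k m l (X z)))"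
      by (simp add: sum_distrib_left mult_ac) (rule sum.swap)
    also have "\<dots> = D (n-1) * (\<Sum>m<n. w m * Jf n R k m (n-1) (X z))"
      by (subst nS, subst sum.lessThan_Suc) (use wJ in simp)
    finally have "D (n-1) = 0" using c by simp
    then show "((\<lambda>s. X s (n - 1)) has_real_derivative 0) (at z)" using D[of "n-1"] n2 by simp
  qed
qed


lemma sum_abs_bound:
  fixes a v :: "nat \<Rightarrow> real"
  assumes "\<And>j. j < n \<Longrightarrow> \<bar>a j\<bar> \<le> c"
  shows "\<bar>\<Sum>j<n. a j * v j\<bar> \<le> c * nrm n v"
proof -
  have "\<bar>\<Sum>j<n. a j * v j\<bar> \<le> (\<Sum>j<n. \<bar>a j * v j\<bar>)" by (rule sum_abs)
  also have "\<dots> \<le> (\<Sum>j<n. c * \<bar>v j\<bar>)"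
    by (rule sum_mono) (use assms in \<open>auto simp: abs_mult intro: mult_right_mono\<close>)
  finally show ?thesis by (simp add: nrm_def sum_distrib_left)
qed

lemma matbound:
  fixes C :: "nat \<Rightarrow> nat \<Rightarrow> real" and w :: "nat \<Rightarrow> real"
  assumes "\<And>m. m < n \<Longrightarrow> \<bar>w m\<bar> \<le> B"
  shows "nrm n (\<lambda>l. \<Sum>m<n. C l m * w m) \<le> (\<Sum>l<n. \<Sum>m<n. \<bar>C l m\<bar>) * B"
proof -
  have "\<bar>\<Sum>m<n. C l m * w m\<bar> \<le> (\<Sum>m<n. \<bar>C l m\<bar>) * B" for l
  proof -
    have "\<bar>\<Sum>m<n. C l m * w m\<bar> \<le> (\<Sum>m<n. \<bar>C l m * w m\<bar>)" by (rule sum_abs)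
    also have "\<dots> \<le> (\<Sum>m<n. \<bar>C l m\<bar> * B)"
      by (rule sum_mono) (use assms in \<open>auto simp: abs_mult intro: mult_left_mono\<close>)
    finally show ?thesis by (simp add: sum_distrib_right)
  qed
  then show ?thesis unfolding nrm_def sum_distrib_right by (intro sum_mono) auto
qed

lemma nrm_diff_sym: "nrm n (\<lambda>l. a l - b l) = nrm n (\<lambda>l. b l - a l)"
  unfolding nrm_def by (simp add: abs_minus_commute)

lemma nrm_tri3: "nrm n (\<lambda>l. a l - c l) \<le> nrm n (\<lambda>l. a l - b l) + nrm n (\<lambda>l. b l - c l)"
  using nrm_triangle[of n "\<lambda>l. a l - b l" "\<lambda>l. b l - c l"] by simp

lemma mvt_F:
  fixes x x' :: "nat \<Rightarrow> real"
  assumes "m < n"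
  shows "\<exists>t. 0 \<le> t \<and> t \<le> 1 \<and> mass_action n R k x m - mass_action n R k x' m =
     (\<Sum>j<n. Jf n R k m j (\<lambda>l. x' l + t * (x l - x' l)) * (x j - x' j))"
proof -
  define \<phi> where "\<phi> t = mass_action n R k (\<lambda>l. x' l + t * (x l - x' l)) m" for t
  have d: "(\<phi> has_real_derivative (\<Sum>j<n. Jf n R k m j (\<lambda>l. x' l + t * (x l - x' l)) * (x j - x' j))) (at t)" for t
    unfolding \<phi>_def by (rule ma_deriv) (auto intro!: derivative_eq_intros)
  obtain t where t: "0 < t" "t < 1" "\<phi> 1 - \<phi> 0 = (1 - 0) * (\<Sum>j<n. Jf n R k m j (\<lambda>l. x' l + t * (x l - x' l)) * (x j - x' j))"
  proof -
    have "\<exists>z>0. z < 1 \<and> \<phi> 1 - \<phi> 0 = (\<Sum>j<n. Jf n R k m j (\<lambda>l. x' l + z * (x l - x' l)) * (x j - x' j))"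
      using MVT2[of 0 1 \<phi> "\<lambda>t. \<Sum>j<n. Jf n R k m j (\<lambda>l. x' l + t * (x l - x' l)) * (x j - x' j)"] d by simp
    then show ?thesis using that by auto
  qed
  have "\<phi> 1 = mass_action n R k x m" unfolding \<phi>_def by simp
  moreover have "\<phi> 0 = mass_action n R k x' m" unfolding \<phi>_def by simp
  ultimately show ?thesis using t by (intro exI[of _ t]) auto
qed

lemma seg_nrm:
  fixes x x' c :: "nat \<Rightarrow> real" and t :: real
  assumes "0 \<le> t" "t \<le> 1"
  shows "nrm n (\<lambda>l. (x' l + t * (x l - x' l)) - c l) \<le> (1 - t) * nrm n (\<lambda>l. x' l - c l) + t * nrm n (\<lambda>l. x l - c l)"
proof -
  have "\<bar>(x' l + t * (x l - x' l)) - c l\<bar> \<le> (1 - t) * \<bar>x' l - c l\<bar> + t * \<bar>x l - c l\<bar>" for l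
  proof -
    have "(x' l + t * (x l - x' l)) - c l = (1 - t) * (x' l - c l) + t * (x l - c l)" by (simp add: algebra_simps)
    then have "\<bar>(x' l + t * (x l - x' l)) - c l\<bar> \<le> \<bar>(1 - t) * (x' l - c l)\<bar> + \<bar>t * (x l - c l)\<bar>"
      by (simp add: abs_triangle_ineq)
    then show ?thesis using assms by (simp add: abs_mult)
  qed
  then show ?thesis unfolding nrm_def sum_distrib_left sum.distrib[symmetric] by (intro sum_mono) auto
qed

lemma seg_close:
  fixes x x' :: "nat \<Rightarrow> real" and t :: real
  assumes "0 \<le> t" "t \<le> 1"
  shows "nrm n (\<lambda>l. (x' l + t * (x l - x' l)) - x' l) \<le> nrm n (\<lambda>l. x l - x' l)"
proof -
  have "\<bar>(x' l + t * (x l - x' l)) - x' l\<bar> \<le> \<bar>x l - x' l\<bar>" for l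
    using assms by (simp add: abs_mult mult_left_le_one_le)
  then show ?thesis unfolding nrm_def by (intro sum_mono) auto
qed


lemma nrm_cong: "(\<And>l. l < n \<Longrightarrow> a l = b l) \<Longrightarrow> nrm n a = nrm n b"
  unfolding nrm_def by (auto intro!: sum.cong)

lemma sum_delta_mult: "(l::nat) < n \<Longrightarrow> (\<Sum>j<n. (if l = j then 1 else 0) * (f j::real)) = f l"
proof -
  assume l: "l < n"
  have "(\<Sum>j<n. (if l = j then 1 else 0) * f j) = (\<Sum>j<n. if l = j then f j else 0)" by (rule sum.cong) auto
  also have "\<dots> = f l" using l by (simp add: sum.delta sum.delta')
  finally show ?thesis .
qed

locale ift =
  fixes n :: nat and R :: "reaction set" and k :: "reaction \<Rightarrow> real"
    and x0 :: "nat \<Rightarrow> real" and z0 :: real and C :: "nat \<Rightarrow> nat \<Rightarrow> real" and K \<rho> :: real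
  assumes eq0: "\<And>m. m < n \<Longrightarrow> io_field n R k z0 x0 m = 0"
    and CA: "\<And>l j. l < n \<Longrightarrow> j < n \<Longrightarrow> (\<Sum>m<n. C l m * Jf n R k m j x0) = (if l = j then 1 else 0)"
    and AC: "\<And>i l. i < n \<Longrightarrow> l < n \<Longrightarrow> (\<Sum>m<n. Jf n R k i m x0 * C m l) = (if i = l then 1 else 0)"
    and Kdef: "K = (\<Sum>l<n. \<Sum>m<n. \<bar>C l m\<bar>) + 1"
    and rpos: "\<rho> > 0"
    and close: "\<And>\<xi> i j. nrm n (\<lambda>l. \<xi> l - x0 l) \<le> \<rho> \<Longrightarrow> i < n \<Longrightarrow> j < n \<Longrightarrow>
        \<bar>Jf n R k i j \<xi> - Jf n R k i j x0\<bar> \<le> 1 / (2 * K)"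
    and detnz: "\<And>\<xi>. nrm n (\<lambda>l. \<xi> l - x0 l) \<le> \<rho> \<Longrightarrow> det (mat n n (\<lambda>(i,j). Jf n R k i j \<xi>)) \<noteq> 0"
    and posB: "\<And>\<xi>. nrm n (\<lambda>l. \<xi> l - x0 l) \<le> \<rho> \<Longrightarrow> positive_vec n \<xi>"
begin

definition T :: "real \<Rightarrow> (nat \<Rightarrow> real) \<Rightarrow> nat \<Rightarrow> real" where
  "T z x l = (if l < n then x l - (\<Sum>m<n. C l m * io_field n R k z x m) else x0 l)"

definition inB :: "(nat \<Rightarrow> real) \<Rightarrow> bool" where
  "inB x \<longleftrightarrow> nrm n (\<lambda>l. x l - x0 l) \<le> \<rho>"

lemma Kpos: "K > 0" and Kge: "(\<Sum>l<n. \<Sum>m<n. \<bar>C l m\<bar>) \<le> K"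
proof -
  have "(\<Sum>l<n. \<Sum>m<n. \<bar>C l m\<bar>) \<ge> 0" by (intro sum_nonneg) auto
  then show "K > 0" "(\<Sum>l<n. \<Sum>m<n. \<bar>C l m\<bar>) \<le> K" unfolding Kdef by auto
qed

lemma Cbound: "B \<ge> 0 \<Longrightarrow> (\<And>m. m < n \<Longrightarrow> \<bar>w m\<bar> \<le> B) \<Longrightarrow> nrm n (\<lambda>l. \<Sum>m<n. C l m * w m) \<le> K * B"
  using matbound[of n w B C] Kge by (meson mult_right_mono order_trans)

lemma io_diff: "io_field n R k z x m - io_field n R k z x' m = mass_action n R k x m - mass_action n R k x' m"
  unfolding io_field_def by simp

lemma contr:
  assumes x: "inB x" and x': "inB x'"
  shows "nrm n (\<lambda>l. T z x l - T z x' l) \<le> nrm n (\<lambda>l. x l - x' l) / 2"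
proof -
  define \<delta> where "\<delta> l = x l - x' l" for l
  have "\<forall>m. \<exists>t. m < n \<longrightarrow> 0 \<le> t \<and> t \<le> 1 \<and> mass_action n R k x m - mass_action n R k x' m =
     (\<Sum>j<n. Jf n R k m j (\<lambda>l. x' l + t * (x l - x' l)) * (x j - x' j))"
    using mvt_F by blast
  from choice[OF this] obtain t where t: "\<And>m. m < n \<Longrightarrow> 0 \<le> t m \<and> t m \<le> 1 \<and>
     mass_action n R k x m - mass_action n R k x' m = (\<Sum>j<n. Jf n R k m j (\<lambda>l. x' l + t m * (x l - x' l)) * (x j - x' j))"
    by blast
  define \<xi> where "\<xi> m = (\<lambda>l. x' l + t m * (x l - x' l))" for m
  have \<xi>B: "nrm n (\<lambda>l. \<xi> m l - x0 l) \<le> \<rho>" if m: "m < n" for m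
  proof -
    have "nrm n (\<lambda>l. \<xi> m l - x0 l) \<le> (1 - t m) * nrm n (\<lambda>l. x' l - x0 l) + t m * nrm n (\<lambda>l. x l - x0 l)"
      unfolding \<xi>_def by (rule seg_nrm) (use t[OF m] in auto)
    also have "\<dots> \<le> (1 - t m) * \<rho> + t m * \<rho>"
      using t[OF m] x x' unfolding inB_def by (intro add_mono mult_left_mono) auto
    finally show ?thesis by (simp add: algebra_simps)
  qed
  define w where "w m = (\<Sum>j<n. (Jf n R k m j x0 - Jf n R k m j (\<xi> m)) * \<delta> j)" for m
  have wb: "\<bar>w m\<bar> \<le> 1 / (2 * K) * nrm n \<delta>" if m: "m < n" for m
    unfolding w_def
    by (rule sum_abs_bound) (use close[OF \<xi>B[OF m] m] in \<open>auto simp: abs_minus_commute\<close>)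
  have Td: "T z x l - T z x' l = (\<Sum>m<n. C l m * w m)" if l: "l < n" for l
  proof -
    have "\<delta> l = (\<Sum>j<n. (if l = j then 1 else 0) * \<delta> j)" using sum_delta_mult[OF l] by simp
    also have "\<dots> = (\<Sum>j<n. (\<Sum>m<n. C l m * Jf n R k m j x0) * \<delta> j)" using CA[OF l] by simp
    also have "\<dots> = (\<Sum>m<n. C l m * (\<Sum>j<n. Jf n R k m j x0 * \<delta> j))"
      by (simp add: sum_distrib_left sum_distrib_right mult_ac) (rule sum.swap)
    finally have dl: "\<delta> l = (\<Sum>m<n. C l m * (\<Sum>j<n. Jf n R k m j x0 * \<delta> j))" .
    have "T z x l - T z x' l = \<delta> l - (\<Sum>m<n. C l m * (io_field n R k z x m - io_field n R k z x' m))"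
      unfolding T_def \<delta>_def using l by (simp add: sum_subtractf right_diff_distrib)
    also have "\<dots> = \<delta> l - (\<Sum>m<n. C l m * (\<Sum>j<n. Jf n R k m j (\<xi> m) * \<delta> j))"
      unfolding io_diff using t by (auto intro!: sum.cong simp: \<xi>_def \<delta>_def)
    also have "\<dots> = (\<Sum>m<n. C l m * w m)"
      unfolding dl w_def by (simp add: sum_subtractf[symmetric] right_diff_distrib[symmetric] left_diff_distrib)
    finally show ?thesis .
  qed
  have "nrm n (\<lambda>l. T z x l - T z x' l) = nrm n (\<lambda>l. \<Sum>m<n. C l m * w m)"
    by (rule nrm_cong) (rule Td)
  also have "\<dots> \<le> K * (1 / (2 * K) * nrm n \<delta>)"
    by (rule Cbound) (use wb nrm_nonneg Kpos in auto)
  also have "\<dots> = nrm n \<delta> / 2" using Kpos by simp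
  finally show ?thesis unfolding \<delta>_def .
qed


lemma io_shift: "m < n \<Longrightarrow> io_field n R k z x0 m = (if m = 0 then z - z0 else 0)"
  using eq0[of m] unfolding io_field_def by auto

lemma T_shift:
  assumes l: "l < n"
  shows "T z x l - T w x l = - (\<Sum>m<n. C l m * (if m = 0 then z - w else 0))"
proof -
  have "T z x l - T w x l = (\<Sum>m<n. C l m * (io_field n R k w x m - io_field n R k z x m))"
    unfolding T_def using l by (simp add: sum_subtractf[symmetric] right_diff_distrib)
  also have "\<dots> = (\<Sum>m<n. - (C l m * (if m = 0 then z - w else 0)))"
    unfolding io_field_def by (rule sum.cong) (auto simp: algebra_simps)
  finally show ?thesis by (simp add: sum_negf)
qed

lemma T_x0: "nrm n (\<lambda>l. T z x0 l - x0 l) \<le> K * \<bar>z - z0\<bar>"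
proof -
  have "nrm n (\<lambda>l. T z x0 l - x0 l) = nrm n (\<lambda>l. \<Sum>m<n. C l m * (if m = 0 then - (z - z0) else 0))"
  proof (rule nrm_cong)
    fix l assume l: "l < n"
    show "T z x0 l - x0 l = (\<Sum>m<n. C l m * (if m = 0 then - (z - z0) else 0))"
      unfolding T_def using l io_shift by (auto simp: sum_negf[symmetric] algebra_simps intro!: sum.cong)
  qed
  also have "\<dots> \<le> K * \<bar>z - z0\<bar>" by (rule Cbound) auto
  finally show ?thesis .
qed

definition dz :: real where "dz = \<rho> / (2 * K)"

lemma dzpos: "dz > 0" unfolding dz_def using rpos Kpos by simp

lemma maps:
  assumes z: "\<bar>z - z0\<bar> \<le> dz" and x: "inB x"
  shows "inB (T z x)"
proof -
  have x0B: "inB x0" unfolding inB_def nrm_def using rpos by simp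
  have "nrm n (\<lambda>l. T z x l - x0 l) \<le> nrm n (\<lambda>l. T z x l - T z x0 l) + nrm n (\<lambda>l. T z x0 l - x0 l)"
    by (rule nrm_tri3)
  also have "\<dots> \<le> nrm n (\<lambda>l. x l - x0 l) / 2 + K * \<bar>z - z0\<bar>"
    by (intro add_mono contr x x0B T_x0)
  also have "\<dots> \<le> \<rho> / 2 + K * dz"
    using x z Kpos unfolding inB_def by (intro add_mono mult_left_mono) auto
  also have "\<dots> = \<rho>" unfolding dz_def using Kpos by simp
  finally show ?thesis unfolding inB_def .
qed

lemma fixed_unique:
  assumes "inB p" "inB q" "T z p = p" "T z q = q" "l < n"
  shows "p l = q l"
proof -
  have "nrm n (\<lambda>l. p l - q l) \<le> nrm n (\<lambda>l. p l - q l) / 2"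
    using contr[OF assms(1,2), of z] assms(3,4) by simp
  then have "nrm n (\<lambda>l. p l - q l) \<le> 0" by simp
  then have "\<bar>p l - q l\<bar> \<le> 0" using nrm_ge[OF assms(5), of "\<lambda>l. p l - q l"] by simp
  then show ?thesis by simp
qed

lemma fixed_eq:
  assumes "T z p = p" "i < n"
  shows "io_field n R k z p i = 0"
proof -
  have c0: "(\<Sum>m<n. C l m * io_field n R k z p m) = 0" if l: "l < n" for l
    using fun_cong[OF assms(1), of l] l unfolding T_def by simp
  have "io_field n R k z p i = (\<Sum>m<n. (if i = m then 1 else 0) * io_field n R k z p m)"
    using sum_delta_mult[OF assms(2)] by simp
  also have "\<dots> = (\<Sum>m<n. (\<Sum>l<n. Jf n R k i l x0 * C l m) * io_field n R k z p m)"
    using AC[OF assms(2)] by simp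
  also have "\<dots> = (\<Sum>l<n. Jf n R k i l x0 * (\<Sum>m<n. C l m * io_field n R k z p m))"
    by (simp add: sum_distrib_left sum_distrib_right mult_ac) (rule sum.swap)
  also have "\<dots> = 0" using c0 by simp
  finally show ?thesis .
qed

lemma fixed_exists:
  assumes z: "\<bar>z - z0\<bar> \<le> dz"
  shows "\<exists>p. inB p \<and> T z p = p"
proof -
  define s where "s j = (T z ^^ j) x0" for j
  have sS: "s (Suc j) = T z (s j)" for j unfolding s_def by simp
  have x0B: "inB x0" unfolding inB_def nrm_def using rpos by simp
  have sB: "inB (s j)" for j
    by (induction j) (auto simp: sS s_def x0B intro: maps[OF z])
  define c0 where "c0 = nrm n (\<lambda>l. s 1 l - s 0 l)"
  have step: "nrm n (\<lambda>l. s (Suc j) l - s j l) \<le> (1/2)^j * c0" for j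
  proof (induction j)
    case 0 then show ?case unfolding c0_def by simp
  next
    case (Suc j)
    have "nrm n (\<lambda>l. s (Suc (Suc j)) l - s (Suc j) l) \<le> nrm n (\<lambda>l. s (Suc j) l - s j l) / 2"
      unfolding sS[of "Suc j"] sS[of j] by (rule contr[OF maps[OF z sB] sB])
    also have "\<dots> \<le> (1/2)^j * c0 / 2" using Suc by simp
    finally show ?case by simp
  qed
  have conv: "\<exists>a. (\<lambda>j. s j l) \<longlonglongrightarrow> a" if l: "l < n" for l
  proof -
    have bnd: "norm (s (Suc j) l - s j l) \<le> c0 * (1/2)^j" for j
      using nrm_ge[OF l, of "\<lambda>l. s (Suc j) l - s j l"] step[of j] by (simp add: mult.commute)
    have "summable (\<lambda>j. c0 * (1/2::real)^j)" by (intro summable_mult summable_geometric) simp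
    then have "summable (\<lambda>j. s (Suc j) l - s j l)"
      by (rule summable_comparison_test[rotated]) (use bnd in auto)
    then have "(\<lambda>N. \<Sum>j<N. s (Suc j) l - s j l) \<longlonglongrightarrow> (\<Sum>j. s (Suc j) l - s j l)"
      by (rule summable_LIMSEQ)
    moreover have "(\<Sum>j<N. s (Suc j) l - s j l) = s N l - s 0 l" for N
      using sum_lessThan_telescope[of "\<lambda>j. s j l" N] by simp
    ultimately have "(\<lambda>N. s N l - s 0 l) \<longlonglongrightarrow> (\<Sum>j. s (Suc j) l - s j l)"
      by simp
    then have "(\<lambda>N. s N l - s 0 l + s 0 l) \<longlonglongrightarrow> (\<Sum>j. s (Suc j) l - s j l) + s 0 l"
      by (intro tendsto_intros)
    then show ?thesis by auto
  qed
  then have "\<forall>l. \<exists>a. l < n \<longrightarrow> (\<lambda>j. s j l) \<longlonglongrightarrow> a" by blast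
  from choice[OF this] obtain a where a: "\<And>l. l < n \<Longrightarrow> (\<lambda>j. s j l) \<longlonglongrightarrow> a l" by blast
  define L where "L l = (if l < n then a l else x0 l)" for l
  have sL: "(\<lambda>j. s j l) \<longlonglongrightarrow> L l" if "l < n" for l using a[OF that] that unfolding L_def by simp
  have LB: "inB L"
  proof -
    have "(\<lambda>j. nrm n (\<lambda>l. s j l - x0 l)) \<longlonglongrightarrow> nrm n (\<lambda>l. L l - x0 l)"
      unfolding nrm_def by (intro tendsto_intros sL) auto
    moreover have "\<forall>j. nrm n (\<lambda>l. s j l - x0 l) \<le> \<rho>" using sB unfolding inB_def by blast
    ultimately show ?thesis unfolding inB_def by (meson LIMSEQ_le_const2)
  qed
  have "T z L l = L l" for l
  proof (cases "l < n")
    case True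
    have "(\<lambda>j. T z (s j) l) \<longlonglongrightarrow> T z L l"
      unfolding T_def io_field_def using True
      by (auto intro!: tendsto_intros ma_tendsto sL)
    moreover have "(\<lambda>j. T z (s j) l) \<longlonglongrightarrow> L l"
      unfolding sS[symmetric] using LIMSEQ_Suc[OF sL[OF True]] .
    ultimately show ?thesis by (rule LIMSEQ_unique)
  next
    case False then show ?thesis unfolding T_def L_def by simp
  qed
  then show ?thesis using LB by (intro exI[of _ L]) auto
qed


definition X :: "real \<Rightarrow> nat \<Rightarrow> real" where
  "X z = (SOME p. inB p \<and> T z p = p)"

lemma X_prop: "\<bar>z - z0\<bar> \<le> dz \<Longrightarrow> inB (X z) \<and> T z (X z) = X z"
  unfolding X_def by (rule someI_ex[OF fixed_exists])

lemma X_z0: "l < n \<Longrightarrow> X z0 l = x0 l"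
proof -
  assume l: "l < n"
  have x0B: "inB x0" unfolding inB_def nrm_def using rpos by simp
  have "T z0 x0 = x0" by (rule ext) (simp add: T_def eq0)
  moreover have "inB (X z0) \<and> T z0 (X z0) = X z0" by (rule X_prop) (use dzpos in simp)
  ultimately show ?thesis using fixed_unique[OF _ x0B _ _ l] by blast
qed

lemma X_lip:
  assumes z: "\<bar>z - z0\<bar> \<le> dz" and w: "\<bar>w - z0\<bar> \<le> dz"
  shows "nrm n (\<lambda>l. X z l - X w l) \<le> 2 * K * \<bar>z - w\<bar>"
proof -
  have Pz: "inB (X z)" "T z (X z) = X z" using X_prop[OF z] by auto
  have Pw: "inB (X w)" "T w (X w) = X w" using X_prop[OF w] by auto
  have "nrm n (\<lambda>l. X z l - X w l) = nrm n (\<lambda>l. T z (X z) l - T w (X w) l)"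
    using Pz Pw by simp
  also have "\<dots> \<le> nrm n (\<lambda>l. T z (X z) l - T z (X w) l) + nrm n (\<lambda>l. T z (X w) l - T w (X w) l)"
    by (rule nrm_tri3)
  also have "nrm n (\<lambda>l. T z (X w) l - T w (X w) l) = nrm n (\<lambda>l. \<Sum>m<n. C l m * (if m = 0 then z - w else 0))"
    unfolding nrm_def by (rule sum.cong) (auto simp: T_shift)
  also have "\<dots> \<le> K * \<bar>z - w\<bar>" by (rule Cbound) auto
  finally have "nrm n (\<lambda>l. X z l - X w l) \<le> nrm n (\<lambda>l. X z l - X w l) / 2 + K * \<bar>z - w\<bar>"
    using contr[OF Pz(1) Pw(1), of z] by simp
  then show ?thesis by simp
qed


lemma X_deriv:
  assumes w: "\<bar>w - z0\<bar> < dz" and l: "l < n"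
  shows "\<exists>D. ((\<lambda>s. X s l) has_real_derivative D) (at w)"
proof -
  define U where "U = {s. \<bar>s - z0\<bar> < dz}"
  have Uo: "open U" unfolding U_def by (rule open_Collect_less) (auto intro!: continuous_intros)
  have wU: "w \<in> U" using w unfolding U_def by simp
  have ev: "eventually (\<lambda>z. z \<in> U \<and> z \<noteq> w) (at w)"
    using eventually_nhds_in_open[OF Uo wU] unfolding eventually_at_filter
    by (auto elim: eventually_mono)
  define Xw where "Xw = X w"
  have Pw: "inB Xw" "T w Xw = Xw" using X_prop[of w] w unfolding Xw_def by auto
  have dw: "det (mat n n (\<lambda>(i,j). Jf n R k i j Xw)) \<noteq> 0" using detnz Pw(1) unfolding inB_def by blast
  obtain Cw where CAw: "\<And>l j. l<n \<Longrightarrow> j<n \<Longrightarrow> (\<Sum>m<n. Cw l m * Jf n R k m j Xw) = (if l = j then 1 else 0)"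
    and ACw: "\<And>i l. i<n \<Longrightarrow> l<n \<Longrightarrow> (\<Sum>m<n. Jf n R k i m Xw * Cw m l) = (if i = l then 1 else 0)"
    using inv_exists[OF dw] by blast
  define v where "v l = - (\<Sum>m<n. Cw l m * (if m = 0 then 1 else 0))" for l
  have Jv: "(\<Sum>j<n. Jf n R k m j Xw * v j) = - (if m = 0 then 1 else 0)" if m: "m < n" for m
  proof -
    have "(\<Sum>j<n. Jf n R k m j Xw * v j) = - (\<Sum>i<n. (\<Sum>j<n. Jf n R k m j Xw * Cw j i) * (if i = 0 then 1 else 0))"
      unfolding v_def by (simp add: sum_distrib_left sum_distrib_right sum_negf mult_ac) (rule sum.swap)
    also have "\<dots> = - (\<Sum>i<n. (if m = i then 1 else 0) * (if i = 0 then 1 else 0))"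
      using ACw[OF m] by simp
    also have "\<dots> = - (if m = 0 then 1 else 0)" using sum_delta_mult[OF m, of "\<lambda>i. if i = 0 then 1 else 0"] by simp
    finally show ?thesis .
  qed
  have "\<forall>zm. \<exists>t. snd zm < n \<longrightarrow> 0 \<le> t \<and> t \<le> 1 \<and> mass_action n R k (X (fst zm)) (snd zm) - mass_action n R k Xw (snd zm) =
     (\<Sum>j<n. Jf n R k (snd zm) j (\<lambda>l. Xw l + t * (X (fst zm) l - Xw l)) * (X (fst zm) j - Xw j))"
    using mvt_F by blast
  from choice[OF this] obtain tt where tt0: "\<forall>zm. snd zm < n \<longrightarrow> 0 \<le> tt zm \<and> tt zm \<le> 1 \<and> mass_action n R k (X (fst zm)) (snd zm) - mass_action n R k Xw (snd zm) =
     (\<Sum>j<n. Jf n R k (snd zm) j (\<lambda>l. Xw l + tt zm * (X (fst zm) l - Xw l)) * (X (fst zm) j - Xw j))"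
    by blast
  have tt: "0 \<le> tt (z,m) \<and> tt (z,m) \<le> 1 \<and>
     mass_action n R k (X z) m - mass_action n R k Xw m =
     (\<Sum>j<n. Jf n R k m j (\<lambda>l. Xw l + tt (z,m) * (X z l - Xw l)) * (X z j - Xw j))" if "m < n" for z m
    using tt0 that by auto
  define \<xi> where "\<xi> z m = (\<lambda>l. Xw l + tt (z,m) * (X z l - Xw l))" for z m
  define q where "q z j = (X z j - Xw j) / (z - w)" for z j
  define r where "r z m = (\<Sum>j<n. (Jf n R k m j Xw - Jf n R k m j (\<xi> z m)) * q z j)" for z m
  have lip: "nrm n (\<lambda>l. X z l - Xw l) \<le> 2 * K * \<bar>z - w\<bar>" if "z \<in> U" for z
    using X_lip[of z w] that w unfolding U_def Xw_def by auto
  have qb: "\<bar>q z j\<bar> \<le> 2 * K" if "z \<in> U" "z \<noteq> w" "j < n" for z j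
  proof -
    have "\<bar>X z j - Xw j\<bar> \<le> 2 * K * \<bar>z - w\<bar>" using nrm_ge[OF that(3)] lip[OF that(1)] by (meson order_trans)
    then show ?thesis unfolding q_def using that(2) by (simp add: divide_le_eq abs_divide)
  qed
  have lin: "(\<Sum>j<n. Jf n R k m j (\<xi> z m) * q z j) = - (if m = 0 then 1 else 0)"
    if "z \<in> U" "z \<noteq> w" "m < n" for z m
  proof -
    have "io_field n R k z (X z) m = 0" using fixed_eq[of z "X z" m] X_prop[of z] that unfolding U_def by auto
    moreover have "io_field n R k w Xw m = 0" using fixed_eq[OF Pw(2) that(3)] .
    ultimately have "(\<Sum>j<n. Jf n R k m j (\<xi> z m) * (X z j - Xw j)) + (if m = 0 then z - w else 0) = 0"
      using tt[OF that(3), of z] unfolding io_field_def \<xi>_def by (auto simp: algebra_simps)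
    then have "(\<Sum>j<n. Jf n R k m j (\<xi> z m) * (X z j - Xw j)) / (z - w) = - (if m = 0 then 1 else 0)"
      using that(2) by (auto simp: field_simps)
    then show ?thesis unfolding q_def by (simp add: sum_divide_distrib)
  qed
  have qv: "q z j - v j = (\<Sum>m<n. Cw j m * r z m)" if "z \<in> U" "z \<noteq> w" "j < n" for z j
  proof -
    have rr: "r z m = (\<Sum>i<n. Jf n R k m i Xw * (q z i - v i))" if m: "m < n" for m
    proof -
      have "(\<Sum>i<n. Jf n R k m i Xw * (q z i - v i)) = (\<Sum>i<n. Jf n R k m i Xw * q z i) - (\<Sum>i<n. Jf n R k m i Xw * v i)"
        by (simp add: right_diff_distrib sum_subtractf)
      also have "\<dots> = (\<Sum>i<n. Jf n R k m i Xw * q z i) - (\<Sum>i<n. Jf n R k m i (\<xi> z m) * q z i)"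
        using Jv[OF m] lin[OF \<open>z \<in> U\<close> \<open>z \<noteq> w\<close> m] by simp
      also have "\<dots> = r z m" unfolding r_def by (simp add: left_diff_distrib sum_subtractf)
      finally show ?thesis by simp
    qed
    have "(\<Sum>m<n. Cw j m * r z m) = (\<Sum>m<n. Cw j m * (\<Sum>i<n. Jf n R k m i Xw * (q z i - v i)))"
      using rr by simp
    also have "\<dots> = (\<Sum>i<n. (\<Sum>m<n. Cw j m * Jf n R k m i Xw) * (q z i - v i))"
      by (simp add: sum_distrib_left sum_distrib_right mult_ac) (rule sum.swap)
    also have "\<dots> = (\<Sum>i<n. (if j = i then 1 else 0) * (q z i - v i))" using CAw[OF that(3)] by simp
    also have "\<dots> = q z j - v j" using sum_delta_mult[OF that(3)] by simp
    finally show ?thesis by simp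
  qed
  have Xc: "((\<lambda>z. X z l' - Xw l') \<longlongrightarrow> 0) (at w)" if l': "l' < n" for l'
  proof (rule Lim_null_comparison)
    show "eventually (\<lambda>z. norm (X z l' - Xw l') \<le> 2 * K * \<bar>z - w\<bar>) (at w)"
      using ev
    proof (rule eventually_mono)
      fix z assume "z \<in> U \<and> z \<noteq> w"
      then show "norm (X z l' - Xw l') \<le> 2 * K * \<bar>z - w\<bar>"
        using nrm_ge[OF l', of "\<lambda>l. X z l - Xw l"] lip[of z] by simp
    qed
    have "((\<lambda>z. 2 * K * \<bar>z - w\<bar>) \<longlongrightarrow> 2 * K * \<bar>w - w\<bar>) (at w)" by (intro tendsto_intros)
    then show "((\<lambda>z. 2 * K * \<bar>z - w\<bar>) \<longlongrightarrow> 0) (at w)" by simp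
  qed
  have \<xi>c: "((\<lambda>z. \<xi> z m l') \<longlongrightarrow> Xw l') (at w)" if l': "l' < n" and m: "m < n" for m l'
  proof -
    have "((\<lambda>z. \<xi> z m l' - Xw l') \<longlongrightarrow> 0) (at w)"
    proof (rule Lim_null_comparison)
      show "eventually (\<lambda>z. norm (\<xi> z m l' - Xw l') \<le> norm (X z l' - Xw l')) (at w)"
        by (rule always_eventually) (use tt[OF m] in \<open>auto simp: \<xi>_def abs_mult mult_left_le_one_le\<close>)
      show "((\<lambda>z. norm (X z l' - Xw l')) \<longlongrightarrow> 0) (at w)" using tendsto_norm_zero[OF Xc[OF l']] .
    qed
    then show ?thesis by (rule LIM_zero_cancel)
  qed
  have rc: "((\<lambda>z. r z m) \<longlongrightarrow> 0) (at w)" if m: "m < n" for m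
  proof (rule Lim_null_comparison)
    show "eventually (\<lambda>z. norm (r z m) \<le> (\<Sum>j<n. \<bar>Jf n R k m j Xw - Jf n R k m j (\<xi> z m)\<bar> * (2 * K))) (at w)"
      using ev
    proof (rule eventually_mono)
      fix z assume z: "z \<in> U \<and> z \<noteq> w"
      have "\<bar>r z m\<bar> \<le> (\<Sum>j<n. \<bar>(Jf n R k m j Xw - Jf n R k m j (\<xi> z m)) * q z j\<bar>)"
        unfolding r_def by (rule sum_abs)
      also have "\<dots> \<le> (\<Sum>j<n. \<bar>Jf n R k m j Xw - Jf n R k m j (\<xi> z m)\<bar> * (2 * K))"
        by (rule sum_mono) (use qb z in \<open>auto simp: abs_mult intro: mult_left_mono\<close>)
      finally show "norm (r z m) \<le> (\<Sum>j<n. \<bar>Jf n R k m j Xw - Jf n R k m j (\<xi> z m)\<bar> * (2 * K))" by simp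
    qed
    have "((\<lambda>z. \<Sum>j<n. \<bar>Jf n R k m j Xw - Jf n R k m j (\<xi> z m)\<bar> * (2 * K)) \<longlongrightarrow>
        (\<Sum>j<n. \<bar>Jf n R k m j Xw - Jf n R k m j Xw\<bar> * (2 * K))) (at w)"
      by (intro tendsto_intros Jf_tendsto \<xi>c m) auto
    then show "((\<lambda>z. \<Sum>j<n. \<bar>Jf n R k m j Xw - Jf n R k m j (\<xi> z m)\<bar> * (2 * K)) \<longlongrightarrow> 0) (at w)" by simp
  qed
  have "((\<lambda>z. \<Sum>m<n. Cw l m * r z m) \<longlongrightarrow> (\<Sum>m<n. Cw l m * 0)) (at w)"
    by (intro tendsto_intros rc) auto
  then have "((\<lambda>z. \<Sum>m<n. Cw l m * r z m) \<longlongrightarrow> 0) (at w)" by simp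
  then have "((\<lambda>z. q z l - v l) \<longlongrightarrow> 0) (at w)"
    by (rule Lim_transform_eventually) (use ev in \<open>auto elim!: eventually_mono simp: qv[OF _ _ l]\<close>)
  then have "((\<lambda>z. q z l) \<longlongrightarrow> v l) (at w)" by (rule LIM_zero_cancel)
  then have "((\<lambda>s. X s l) has_real_derivative v l) (at w)"
    unfolding has_field_derivative_iff q_def Xw_def .
  then show ?thesis by blast
qed


lemma branch: "equilibrium_branch n R k X dz z0 x0"
proof -
  have A: "io_equilibrium n R k (X z) z \<and> (\<forall>i<n. (\<lambda>s. X s i) differentiable at z)" if z: "\<bar>z - z0\<bar> < dz" for z
  proof
    have P: "inB (X z)" "T z (X z) = X z" using X_prop[of z] z by auto
    show "io_equilibrium n R k (X z) z"
      unfolding io_equilibrium_def using posB[of "X z"] P fixed_eq[OF P(2)] unfolding inB_def by blast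
    show "\<forall>i<n. (\<lambda>s. X s i) differentiable at z"
      using X_deriv[OF z] unfolding real_differentiable_def by blast
  qed
  show ?thesis unfolding equilibrium_branch_def using dzpos X_z0 A by blast
qed

end

lemma branch_exists:
  assumes eq: "io_equilibrium n R k x0 z0"
    and dJ0: "det (mat n n (\<lambda>(i,j). Jf n R k i j x0)) \<noteq> 0"
  shows "\<exists>X d. equilibrium_branch n R k X d z0 x0"
proof -
  obtain C where CA: "\<And>l j. l<n \<Longrightarrow> j<n \<Longrightarrow> (\<Sum>m<n. C l m * Jf n R k m j x0) = (if l = j then 1 else 0)"
    and AC: "\<And>i l. i<n \<Longrightarrow> l<n \<Longrightarrow> (\<Sum>m<n. Jf n R k i m x0 * C m l) = (if i = l then 1 else 0)"
    using inv_exists[OF dJ0] by blast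
  define K where "K = (\<Sum>l<n. \<Sum>m<n. \<bar>C l m\<bar>) + 1"
  have Kpos: "K > 0" unfolding K_def by (smt (verit) sum_nonneg abs_ge_zero)
  have eq0: "\<And>m. m < n \<Longrightarrow> io_field n R k z0 x0 m = 0" and px: "positive_vec n x0"
    using eq unfolding io_equilibrium_def by auto
  define g1 where "g1 \<xi> = (\<Sum>i<n. \<Sum>j<n. \<bar>Jf n R k i j \<xi> - Jf n R k i j x0\<bar>)" for \<xi>
  have "\<exists>\<rho>>0. \<forall>\<xi>. nrm n (\<lambda>l. \<xi> l - x0 l) \<le> \<rho> \<longrightarrow> \<bar>g1 \<xi> - g1 x0\<bar> < 1 / (2 * K)"
  proof (rule seq_cont_nbhd)
    fix s assume "\<And>l. l < n \<Longrightarrow> (\<lambda>m. s m l) \<longlonglongrightarrow> x0 l"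
    then show "(\<lambda>m. g1 (s m)) \<longlonglongrightarrow> g1 x0" unfolding g1_def by (intro tendsto_intros Jf_tendsto) auto
  qed (use Kpos in simp)
  then obtain \<rho>1 where r1: "\<rho>1 > 0" "\<And>\<xi>. nrm n (\<lambda>l. \<xi> l - x0 l) \<le> \<rho>1 \<Longrightarrow> \<bar>g1 \<xi> - g1 x0\<bar> < 1 / (2 * K)"
    by blast
  define g2 where "g2 \<xi> = det (mat n n (\<lambda>(i,j). Jf n R k i j \<xi>))" for \<xi>
  have "\<exists>\<rho>>0. \<forall>\<xi>. nrm n (\<lambda>l. \<xi> l - x0 l) \<le> \<rho> \<longrightarrow> \<bar>g2 \<xi> - g2 x0\<bar> < \<bar>g2 x0\<bar>"
  proof (rule seq_cont_nbhd)
    fix s assume "\<And>l. l < n \<Longrightarrow> (\<lambda>m. s m l) \<longlonglongrightarrow> x0 l"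
    then show "(\<lambda>m. g2 (s m)) \<longlonglongrightarrow> g2 x0" unfolding g2_def by (intro det_tendsto Jf_tendsto) auto
  qed (use dJ0 g2_def in simp)
  then obtain \<rho>2 where r2: "\<rho>2 > 0" "\<And>\<xi>. nrm n (\<lambda>l. \<xi> l - x0 l) \<le> \<rho>2 \<Longrightarrow> \<bar>g2 \<xi> - g2 x0\<bar> < \<bar>g2 x0\<bar>"
    by blast
  define mn where "mn = (if n = 0 then 1 else Min (x0 ` {..<n}))"
  have mnpos: "mn > 0" and mnle: "\<And>l. l < n \<Longrightarrow> mn \<le> x0 l"
  proof -
    show "mn > 0"
    proof (cases "n = 0")
      case False
      have "0 < Min (x0 ` {..<n})" using px False unfolding positive_vec_def by (subst Min_gr_iff) auto
      then show ?thesis unfolding mn_def using False by simp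
    qed (simp add: mn_def)
    show "\<And>l. l < n \<Longrightarrow> mn \<le> x0 l" unfolding mn_def by auto
  qed
  define \<rho> where "\<rho> = min \<rho>1 (min \<rho>2 (mn / 2))"
  have rpos: "\<rho> > 0" unfolding \<rho>_def using r1 r2 mnpos by simp
  interpret I: ift n R k x0 z0 C K \<rho>
  proof
    show "\<And>m. m < n \<Longrightarrow> io_field n R k z0 x0 m = 0" by (rule eq0)
    show "\<And>l j. l < n \<Longrightarrow> j < n \<Longrightarrow> (\<Sum>m<n. C l m * Jf n R k m j x0) = (if l = j then 1 else 0)" by (rule CA)
    show "\<And>i l. i < n \<Longrightarrow> l < n \<Longrightarrow> (\<Sum>m<n. Jf n R k i m x0 * C m l) = (if i = l then 1 else 0)" by (rule AC)
    show "K = (\<Sum>l<n. \<Sum>m<n. \<bar>C l m\<bar>) + 1" by (rule K_def)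
    show "\<rho> > 0" by (rule rpos)
  next
    fix \<xi> i j assume xi: "nrm n (\<lambda>l. \<xi> l - x0 l) \<le> \<rho>" and ij: "i < n" "j < n"
    have "g1 \<xi> < 1 / (2 * K)" using r1(2)[of \<xi>] xi unfolding \<rho>_def by (simp add: g1_def)
    moreover have "\<bar>Jf n R k i j \<xi> - Jf n R k i j x0\<bar> \<le> g1 \<xi>"
    proof -
      have "\<bar>Jf n R k i j \<xi> - Jf n R k i j x0\<bar> \<le> (\<Sum>j<n. \<bar>Jf n R k i j \<xi> - Jf n R k i j x0\<bar>)"
        by (rule member_le_sum) (use ij in auto)
      also have "\<dots> \<le> g1 \<xi>" unfolding g1_def
        by (rule member_le_sum[where f="\<lambda>i. \<Sum>j<n. \<bar>Jf n R k i j \<xi> - Jf n R k i j x0\<bar>"])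
           (use ij in \<open>auto intro: sum_nonneg\<close>)
      finally show ?thesis .
    qed
    ultimately show "\<bar>Jf n R k i j \<xi> - Jf n R k i j x0\<bar> \<le> 1 / (2 * K)" by simp
  next
    fix \<xi> assume xi: "nrm n (\<lambda>l. \<xi> l - x0 l) \<le> \<rho>"
    have "\<bar>g2 \<xi> - g2 x0\<bar> < \<bar>g2 x0\<bar>" using r2(2)[of \<xi>] xi unfolding \<rho>_def by simp
    then have "g2 \<xi> \<noteq> 0" by auto
    then show "det (mat n n (\<lambda>(i,j). Jf n R k i j \<xi>)) \<noteq> 0" unfolding g2_def .
  next
    fix \<xi> assume xi: "nrm n (\<lambda>l. \<xi> l - x0 l) \<le> \<rho>"
    show "positive_vec n \<xi>" unfolding positive_vec_def
    proof (intro allI impI)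
      fix l assume l: "l < n"
      have "\<bar>\<xi> l - x0 l\<bar> \<le> mn / 2" using nrm_ge[OF l, of "\<lambda>l. \<xi> l - x0 l"] xi unfolding \<rho>_def by simp
      then have "x0 l - \<xi> l \<le> mn / 2" by linarith
      then show "\<xi> l > 0" using mnle[OF l] mnpos by linarith
    qed
  qed
  show ?thesis using I.branch by blast
qed


theorem mainTheorem3:
  fixes n :: nat and R :: "reaction set"
  assumes n2: "n \<ge> 2"
    and RN: "reaction_network n R"
    and hyp: "\<And>rs :: nat \<Rightarrow> reaction.
       (\<forall>i<n. rs i \<in> homeostasis_network n R) \<Longrightarrow> inj_on rs {0..<n} \<Longrightarrow>
       det (mat n n (\<lambda>(i, j). real (fst (rs j) i))) *
       det (mat n n (\<lambda>(i, j). real (snd (rs j) i) - real (fst (rs j) i))) = 0"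
  shows "(\<forall>k :: reaction \<Rightarrow> real. (\<forall>r\<in>R. k r > 0) \<longrightarrow>
            (\<forall>x. positive_vec n x \<longrightarrow> det (B_matrix n R k x) = 0))
       \<and> (\<forall>(k :: reaction \<Rightarrow> real) x0 z0. (\<forall>r\<in>R. k r > 0) \<longrightarrow>
            io_equilibrium n R k x0 z0 \<longrightarrow> linearly_stable n R k x0 z0 \<longrightarrow>
            (\<exists>X d. equilibrium_branch n R k X d z0 x0) \<and>
            (\<forall>X d. equilibrium_branch n R k X d z0 x0 \<longrightarrow>
               (\<exists>e>0. \<forall>z. \<bar>z - z0\<bar> < e \<longrightarrow>
                  ((\<lambda>s. X s (n - 1)) has_real_derivative 0) (at z))))"
proof (intro conjI allI impI)
  fix k :: "reaction \<Rightarrow> real" and x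
  assume px: "positive_vec n x"
  show "det (B_matrix n R k x) = 0"
    by (rule detB_zero[OF n2 RN]) (use hyp px in auto)
next
  fix k :: "reaction \<Rightarrow> real" and x0 z0
  assume eq0: "io_equilibrium n R k x0 z0" and st: "linearly_stable n R k x0 z0"
  show "\<exists>X d. equilibrium_branch n R k X d z0 x0"
    by (rule branch_exists[OF eq0 stable_det[OF st]])
  fix X d assume br: "equilibrium_branch n R k X d z0 x0"
  show "\<exists>e>0. \<forall>z. \<bar>z - z0\<bar> < e \<longrightarrow> ((\<lambda>s. X s (n - 1)) has_real_derivative 0) (at z)"
    by (rule perfect_homeostasis[OF n2 _ st br], rule detB_zero[OF n2 RN]) (use hyp in auto)
qed

end
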